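(* Let $L_{7,2}\oplus L_1$ be the eight-dimensional real Lie algebra with basis $X_1,\dots,X_8$ whose only nonzero brackets (for $i<j$, $[X_i,X_j]=\sum_kC_{ij}^kX_k$) are $C_{23}^1=1,C_{12}^3=1,C_{13}^2=-1,C_{14}^7=\tfrac12,C_{15}^6=\tfrac12,C_{16}^5=-\tfrac12,C_{17}^4=-\tfrac12,C_{24}^5=\tfrac12,C_{25}^4=-\tfrac12,C_{26}^7=\tfrac12,C_{27}^6=-\tfrac12,C_{34}^6=\tfrac12,C_{35}^7=-\tfrac12,C_{36}^4=-\tfrac12,C_{37}^5=\tfrac12$ (so $X_8$ is central), and let $L_{7,7}\oplus L_1$ be the eight-dimensional real Lie algebra with basis $X_1,\dots,X_8$ whose only nonzero brackets are $C_{12}^2=2,C_{13}^3=-2,C_{23}^1=1,C_{14}^4=1,C_{15}^5=-1,C_{25}^4=1,C_{27}^6=1,C_{34}^5=1,C_{16}^6=1,C_{17}^7=-1,C_{36}^7=1$ (so $X_8$ is central). Then $L_{7,2}\oplus L_1$ is a contraction of $\mathfrak{su}(3)$ and of $\mathfrak{su}(2,1)$, while $L_{7,7}\oplus L_1$ is a contraction of $\mathfrak{su}(2,1)$ and of $\mathfrak{sl}(3,\mathbb{R})$.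
   Context: All Lie algebras are over $\mathbb{R}$. Unlisted brackets $[X_i,X_j]$, $i<j$, are zero; the others follow by antisymmetry. Contraction: for a Lie algebra $(V,[\cdot,\cdot])$ and nonsingular linear maps $\Phi_t$, $t\in[1,\infty)$, if $[X,Y]_\infty=\lim_{t\to\infty}\Phi_t^{-1}[\Phi_tX,\Phi_tY]$ exists for all $X,Y$, any Lie algebra isomorphic to $(V,[\cdot,\cdot]_\infty)$ is a contraction of $(V,[\cdot,\cdot])$. $\mathfrak{su}(3)$, $\mathfrak{su}(2,1)$, $\mathfrak{sl}(3,\mathbb{R})$ are the real forms of $\mathfrak{sl}(3,\mathbb{C})$. *)

theory Defs
  imports "HOL-Analysis.Analysis"
begin

text \<open>A real Lie algebra is given by a real subspace V of an ambient real vector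
space together with a bracket on V.\<close>

definition lie_iso ::
  "'a::real_vector set \<Rightarrow> ('a \<Rightarrow> 'a \<Rightarrow> 'a) \<Rightarrow> 'b::real_vector set \<Rightarrow> ('b \<Rightarrow> 'b \<Rightarrow> 'b)
     \<Rightarrow> ('a \<Rightarrow> 'b) \<Rightarrow> bool" where
  "lie_iso V br W br' f \<longleftrightarrow> linear f \<and> bij_betw f V W \<and>
     (\<forall>X\<in>V. \<forall>Y\<in>V. f (br X Y) = br' (f X) (f Y))"

definition is_contraction_of ::
  "'b::real_vector set \<Rightarrow> ('b \<Rightarrow> 'b \<Rightarrow> 'b) \<Rightarrow>
   'a::real_normed_vector set \<Rightarrow> ('a \<Rightarrow> 'a \<Rightarrow> 'a) \<Rightarrow> bool" where
  "is_contraction_of W br' V br \<longleftrightarrow>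
     (\<exists>(\<Phi> :: real \<Rightarrow> 'a \<Rightarrow> 'a) (brinf :: 'a \<Rightarrow> 'a \<Rightarrow> 'a).
        (\<forall>t\<ge>1. linear (\<Phi> t) \<and> bij_betw (\<Phi> t) V V) \<and>
        (\<forall>X\<in>V. \<forall>Y\<in>V.
           ((\<lambda>t. inv_into V (\<Phi> t) (br (\<Phi> t X) (\<Phi> t Y))) \<longlongrightarrow> brinf X Y) at_top) \<and>
        (\<exists>f. lie_iso V brinf W br' f))"

definition commutator :: "'a::comm_ring_1^'n^'n \<Rightarrow> 'a^'n^'n \<Rightarrow> 'a^'n^'n" where
  "commutator A B = A ** B - B ** A"

definition mtrace :: "'a::comm_ring_1^'n^'n \<Rightarrow> 'a" where
  "mtrace A = (\<Sum>i\<in>UNIV. A $ i $ i)"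

definition adjoint3 :: "complex^3^3 \<Rightarrow> complex^3^3" where
  "adjoint3 A = (\<chi> i j. cnj (A $ j $ i))"

definition su3 :: "(complex^3^3) set" where
  "su3 = {A. adjoint3 A = - A \<and> mtrace A = 0}"

definition J21 :: "complex^3^3" where
  "J21 = (\<chi> i j. if i = j then (if i = 3 then -1 else 1) else 0)"

definition su21 :: "(complex^3^3) set" where
  "su21 = {A. adjoint3 A ** J21 + J21 ** A = 0 \<and> mtrace A = 0}"

definition sl3R :: "(real^3^3) set" where
  "sl3R = {A. mtrace A = 0}"

text \<open>The basis X_1..X_8 of R^8: X_i is the unit vector at index idx8 i, where
idx8 i = of_nat i :: 8 (a bijection from {1..8} onto the index type 8).\<close>
definition idx8 :: "nat \<Rightarrow> 8" where "idx8 i = of_nat i"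

definition basisX :: "nat \<Rightarrow> real^8" where "basisX i = axis (idx8 i) 1"

definition antisym_sc :: "(nat \<Rightarrow> nat \<Rightarrow> nat \<Rightarrow> real) \<Rightarrow> nat \<Rightarrow> nat \<Rightarrow> nat \<Rightarrow> real" where
  "antisym_sc C i j k = (if i < j then C i j k else if j < i then - C j i k else 0)"

definition sc_bracket :: "(nat \<Rightarrow> nat \<Rightarrow> nat \<Rightarrow> real) \<Rightarrow> real^8 \<Rightarrow> real^8 \<Rightarrow> real^8" where
  "sc_bracket C x y = (\<Sum>i\<in>{1..8}. \<Sum>j\<in>{1..8}.
      (x $ idx8 i * y $ idx8 j) *\<^sub>R (\<Sum>k\<in>{1..8}. antisym_sc C i j k *\<^sub>R basisX k))"

definition sc_table :: "((nat \<times> nat \<times> nat) \<times> real) list \<Rightarrow> nat \<Rightarrow> nat \<Rightarrow> nat \<Rightarrow> real" where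
  "sc_table l i j k = (case map_of l (i, j, k) of None \<Rightarrow> 0 | Some c \<Rightarrow> c)"

text \<open>L_{7,2} + L_1: entries ((i,j,k), C_ij^k), i<j.\<close>
definition C_L72 :: "nat \<Rightarrow> nat \<Rightarrow> nat \<Rightarrow> real" where
  "C_L72 = sc_table
    [((2,3,1), 1), ((1,2,3), 1), ((1,3,2), -1),
     ((1,4,7), 1/2), ((1,5,6), 1/2), ((1,6,5), -1/2), ((1,7,4), -1/2),
     ((2,4,5), 1/2), ((2,5,4), -1/2), ((2,6,7), 1/2), ((2,7,6), -1/2),
     ((3,4,6), 1/2), ((3,5,7), -1/2), ((3,6,4), -1/2), ((3,7,5), 1/2)]"

definition C_L77 :: "nat \<Rightarrow> nat \<Rightarrow> nat \<Rightarrow> real" where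
  "C_L77 = sc_table
    [((1,2,2), 2), ((1,3,3), -2), ((2,3,1), 1), ((1,4,4), 1), ((1,5,5), -1),
     ((2,5,4), 1), ((2,7,6), 1), ((3,4,5), 1), ((1,6,6), 1), ((1,7,7), -1),
     ((3,6,7), 1)]"

definition L72_L1 :: "real^8 \<Rightarrow> real^8 \<Rightarrow> real^8" where
  "L72_L1 = sc_bracket C_L72"

definition L77_L1 :: "real^8 \<Rightarrow> real^8 \<Rightarrow> real^8" where
  "L77_L1 = sc_bracket C_L77"

end

theory Submission
  imports Defs
begin


lemma nat8: "{1..8::nat} = {1,2,3,4,5,6,7,8}" by auto

lemma idx8_inj: "inj_on idx8 {1..8}"
  unfolding nat8 idx8_def by (simp add: inj_on_def)

lemma idx8_surj: "idx8 ` {1..8} = UNIV"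
proof -
  have "card (idx8 ` {1..8}) = 8" using card_image[OF idx8_inj] by simp
  moreover have "card (UNIV :: 8 set) = 8" by simp
  ultimately show ?thesis by (intro card_subset_eq) auto
qed

lemma basisX_comp: "i \<in> {1..8} \<Longrightarrow> k \<in> {1..8} \<Longrightarrow> basisX i $ idx8 k = (if i = k then 1 else 0)"
  using inj_onD[OF idx8_inj, of i k] unfolding basisX_def by (auto simp: axis_def)

lemma sum_basisX_comp: "m \<in> {1..8} \<Longrightarrow> (\<Sum>k\<in>{1..8}. c k *\<^sub>R basisX k) $ idx8 m = c m"
proof -
  assume m: "m \<in> {1..8}"
  have "(\<Sum>k\<in>{1..8}. c k *\<^sub>R basisX k) $ idx8 m = (\<Sum>k\<in>{1..8}. c k * (if k = m then 1 else 0))"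
    using m by (simp add: basisX_comp)
  also have "\<dots> = c m" using m by (simp add: if_distrib cong: if_cong)
  finally show ?thesis .
qed

lemma sum_basisX_comp': "m \<in> {1..8} \<Longrightarrow> (\<Sum>k\<in>{1..8}. f k * basisX k $ idx8 m) = f m"
proof -
  assume m: "m \<in> {1..8}"
  have "(\<Sum>k\<in>{1..8}. f k * basisX k $ idx8 m) = (\<Sum>k\<in>{1..8}. f k *\<^sub>R basisX k) $ idx8 m" by simp
  also have "\<dots> = f m" by (rule sum_basisX_comp[OF m])
  finally show ?thesis .
qed

lemma vec8_eq: "(\<And>m. m \<in> {1..8} \<Longrightarrow> x $ idx8 m = y $ idx8 m) \<Longrightarrow> x = (y::real^8)"
  by (metis (mono_tags, lifting) idx8_surj imageE iso_tuple_UNIV_I vec_eq_iff)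

lemma decomp8: "(\<Sum>i\<in>{1..8}. x $ idx8 i *\<^sub>R basisX i) = x"
proof (rule vec8_eq)
  fix m :: nat assume m: "m \<in> {1..8}"
  show "(\<Sum>i\<in>{1..8}. x $ idx8 i *\<^sub>R basisX i) $ idx8 m = x $ idx8 m" by (rule sum_basisX_comp[OF m])
qed

definition gmap :: "(nat \<Rightarrow> 'a::real_vector) \<Rightarrow> real^8 \<Rightarrow> 'a" where
  "gmap E x = (\<Sum>i\<in>{1..8}. x $ idx8 i *\<^sub>R E i)"

definition fmap :: "(nat \<Rightarrow> 'a \<Rightarrow> real) \<Rightarrow> 'a \<Rightarrow> real^8" where
  "fmap c A = (\<Sum>k\<in>{1..8}. c k A *\<^sub>R basisX k)"

definition sv :: "real \<Rightarrow> nat \<Rightarrow> real" where "sv t i = (if i \<le> 3 then 1 else 1/t)"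

definition phi :: "real \<Rightarrow> real^8 \<Rightarrow> real^8" where
  "phi t x = (\<Sum>i\<in>{1..8}. (sv t i * x $ idx8 i) *\<^sub>R basisX i)"

definition phiinv :: "real \<Rightarrow> real^8 \<Rightarrow> real^8" where
  "phiinv t x = (\<Sum>i\<in>{1..8}. (x $ idx8 i / sv t i) *\<^sub>R basisX i)"

definition gb :: "(nat\<Rightarrow>nat\<Rightarrow>nat\<Rightarrow>real) \<Rightarrow> real^8 \<Rightarrow> real^8 \<Rightarrow> real^8" where
  "gb D x y = (\<Sum>i\<in>{1..8}. \<Sum>j\<in>{1..8}.
      (x $ idx8 i * y $ idx8 j) *\<^sub>R (\<Sum>k\<in>{1..8}. D i j k *\<^sub>R basisX k))"

lemma sc_gb: "sc_bracket C = gb (antisym_sc C)"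
  by (simp add: fun_eq_iff sc_bracket_def gb_def)

lemma gb_comp: "m \<in> {1..8} \<Longrightarrow> gb D x y $ idx8 m = (\<Sum>i\<in>{1..8}. \<Sum>j\<in>{1..8}. x $ idx8 i * y $ idx8 j * D i j m)"
proof -
  assume m: "m \<in> {1..8}"
  show ?thesis unfolding gb_def
    by (simp only: sum_component vector_scaleR_component real_scaleR_def sum_basisX_comp'[OF m])
qed

lemma linear_gmap: "linear (gmap E)"
  by (rule linearI) (simp_all add: gmap_def scaleR_add_left sum.distrib scaleR_sum_right)

lemma linear_phi: "linear (phi t)"
  by (rule linearI) (simp_all add: phi_def distrib_left scaleR_add_left sum.distrib scaleR_sum_right mult_ac)

lemma linear_fmap: "(\<And>k. k \<in> {1..8} \<Longrightarrow> linear (c k)) \<Longrightarrow> linear (fmap c)"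
proof -
  assume lc: "\<And>k. k \<in> {1..8} \<Longrightarrow> linear (c k)"
  show ?thesis
  proof (rule linearI)
    fix x y
    have "fmap c (x + y) = (\<Sum>k\<in>{1..8}. c k x *\<^sub>R basisX k + c k y *\<^sub>R basisX k)"
      unfolding fmap_def by (rule sum.cong) (auto simp: linear_add[OF lc] scaleR_add_left)
    then show "fmap c (x + y) = fmap c x + fmap c y" by (simp add: fmap_def sum.distrib)
  next
    fix r x
    have "fmap c (r *\<^sub>R x) = (\<Sum>k\<in>{1..8}. r *\<^sub>R (c k x *\<^sub>R basisX k))"
      unfolding fmap_def by (rule sum.cong) (auto simp: linear_scale[OF lc])
    then show "fmap c (r *\<^sub>R x) = r *\<^sub>R fmap c x" by (simp add: fmap_def scaleR_sum_right)
  qed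
qed

lemma phi_comp: "m \<in> {1..8} \<Longrightarrow> phi t x $ idx8 m = sv t m * x $ idx8 m"
  unfolding phi_def by (rule sum_basisX_comp)
lemma phiinv_comp: "m \<in> {1..8} \<Longrightarrow> phiinv t x $ idx8 m = x $ idx8 m / sv t m"
  unfolding phiinv_def by (rule sum_basisX_comp)
lemma sv_nz: "t \<ge> 1 \<Longrightarrow> sv t i \<noteq> 0" by (simp add: sv_def)

lemma phi_phiinv: "t \<ge> 1 \<Longrightarrow> phi t (phiinv t x) = x"
  by (rule vec8_eq) (simp add: phi_comp phiinv_comp sv_nz)
lemma phiinv_phi: "t \<ge> 1 \<Longrightarrow> phiinv t (phi t x) = x"
  by (rule vec8_eq) (simp add: phi_comp phiinv_comp sv_nz)

lemma fmap_comp: "m \<in> {1..8} \<Longrightarrow> fmap c A $ idx8 m = c m A"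
  unfolding fmap_def by (rule sum_basisX_comp)

lemma term_lim:
  fixes d a :: real
  assumes i: "i \<in> {1..8}" and j: "j \<in> {1..8}" and m: "m \<in> {1..8}"
  and c1: "i \<le> 3 \<Longrightarrow> j \<le> 3 \<Longrightarrow> 3 < m \<Longrightarrow> d = 0"
  and c2: "a = (if (i \<le> 3 \<and> j \<le> 3 \<and> m \<le> 3) \<or> (3 < m \<and> (i \<le> 3) \<noteq> (j \<le> 3)) then d else 0)"
  shows "((\<lambda>t. d * (sv t i * sv t j / sv t m)) \<longlongrightarrow> a) at_top"
proof (cases "i \<le> 3 \<and> j \<le> 3 \<and> 3 < m")
  case True
  then show ?thesis using c1 c2 by simp
next
  case False
  let ?good = "(i \<le> 3 \<and> j \<le> 3 \<and> m \<le> 3) \<or> (3 < m \<and> (i \<le> 3) \<noteq> (j \<le> 3))"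
  define K where "K t = (if ?good then 1 else if m \<le> 3 \<and> (i \<le> 3 \<or> j \<le> 3) then 1/t
      else if m \<le> 3 then 1/t^2 else 1/t)" for t :: real
  have ev: "eventually (\<lambda>t. K t = sv t i * sv t j / sv t m) at_top"
    by (rule eventually_at_top_linorderI[of 1])
       (use False in \<open>cases "i \<le> 3"; cases "j \<le> 3"; cases "m \<le> 3"; auto simp: K_def sv_def field_simps power2_eq_square\<close>)
  have l1: "((\<lambda>t::real. 1/t) \<longlongrightarrow> 0) at_top"
    by (rule tendsto_divide_0[OF tendsto_const filterlim_at_top_imp_at_infinity[OF filterlim_ident]])
  have l2: "((\<lambda>t::real. 1/t^2) \<longlongrightarrow> 0) at_top"
    by (rule tendsto_divide_0[OF tendsto_const filterlim_at_top_imp_at_infinity])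
       (simp add: filterlim_pow_at_top filterlim_ident)
  have lK: "(K \<longlongrightarrow> (if ?good then 1 else 0)) at_top"
    unfolding K_def using False
    by (cases "i \<le> 3"; cases "j \<le> 3"; cases "m \<le> 3"; simp add: l1 l2)
  have w: "((\<lambda>t. sv t i * sv t j / sv t m) \<longlongrightarrow> (if ?good then 1 else 0)) at_top"
    by (rule Lim_transform_eventually[OF lK ev])
  have "((\<lambda>t. d * (sv t i * sv t j / sv t m)) \<longlongrightarrow> d * (if ?good then 1 else 0)) at_top"
    by (rule tendsto_mult_left[OF w])
  moreover have "d * (if ?good then 1 else 0) = a" using c2 by simp
  ultimately show ?thesis by simp
qed

lemma abstract:
  fixes V :: "'a::real_normed_vector set" and br :: "'a \<Rightarrow> 'a \<Rightarrow> 'a"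
    and c :: "nat \<Rightarrow> 'a \<Rightarrow> real" and E :: "nat \<Rightarrow> 'a"
  assumes linc: "\<And>k. k \<in> {1..8} \<Longrightarrow> linear (c k)"
  and gf: "\<And>A. A \<in> V \<Longrightarrow> gmap E (fmap c A) = A"
  and gV: "\<And>x. gmap E x \<in> V"
  and cE: "\<And>i k. i \<in> {1..8} \<Longrightarrow> k \<in> {1..8} \<Longrightarrow> c k (E i) = (if i = k then 1 else 0)"
  and bil: "bilinear br"
  and brV: "\<And>A B. A \<in> V \<Longrightarrow> B \<in> V \<Longrightarrow> br A B \<in> V"
  and c1: "\<And>i j k. i \<in> {1..8} \<Longrightarrow> j \<in> {1..8} \<Longrightarrow> k \<in> {1..8} \<Longrightarrow> i \<le> 3 \<Longrightarrow> j \<le> 3 \<Longrightarrow> 3 < k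
      \<Longrightarrow> c k (br (E i) (E j)) = 0"
  and c2: "\<And>i j k. i \<in> {1..8} \<Longrightarrow> j \<in> {1..8} \<Longrightarrow> k \<in> {1..8} \<Longrightarrow>
      antisym_sc C i j k = (if (i \<le> 3 \<and> j \<le> 3 \<and> k \<le> 3) \<or> (3 < k \<and> (i \<le> 3) \<noteq> (j \<le> 3))
         then c k (br (E i) (E j)) else 0)"
  shows "is_contraction_of UNIV (sc_bracket C) V br"
proof -
  let ?f = "fmap c" and ?g = "gmap E"
  have linf: "linear ?f" using linc by (rule linear_fmap)
  have fE: "?f (E i) = basisX i" if "i \<in> {1..8}" for i
  proof (rule vec8_eq)
    fix m :: nat assume m: "m \<in> {1..8}"
    show "fmap c (E i) $ idx8 m = basisX i $ idx8 m"
      using fmap_comp[OF m, where c=c and A="E i"] cE[OF that m] basisX_comp[OF that m] by simp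
  qed
  have fg: "?f (?g x) = x" for x
  proof -
    have "?f (?g x) = (\<Sum>i\<in>{1..8}. x $ idx8 i *\<^sub>R ?f (E i))"
      unfolding gmap_def by (simp add: linear_sum[OF linf] linear_scale[OF linf])
    also have "\<dots> = (\<Sum>i\<in>{1..8}. x $ idx8 i *\<^sub>R basisX i)"
      by (rule sum.cong) (simp_all add: fE)
    also have "\<dots> = x" by (rule decomp8)
    finally show ?thesis .
  qed
  define Dm where "Dm i j k = c k (br (E i) (E j))" for i j k
  have linl: "linear (\<lambda>x. br x y)" for y using bil by (simp add: bilinear_def)
  have linr: "linear (br x)" for x using bil by (simp add: bilinear_def)
  have brg: "?f (br (?g u) (?g v)) = gb Dm u v" for u v
  proof -
    have "br (?g u) (?g v) = (\<Sum>j\<in>{1..8}. \<Sum>i\<in>{1..8}. (v $ idx8 j * u $ idx8 i) *\<^sub>R br (E i) (E j))"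
      unfolding gmap_def
      by (simp add: linear_sum[OF linl] linear_scale[OF linl] linear_sum[OF linr] linear_scale[OF linr]
          scaleR_sum_right)
    also have "\<dots> = (\<Sum>i\<in>{1..8}. \<Sum>j\<in>{1..8}. (u $ idx8 i * v $ idx8 j) *\<^sub>R br (E i) (E j))"
      by (subst sum.swap) (simp add: mult.commute)
    finally have "br (?g u) (?g v) = (\<Sum>i\<in>{1..8}. \<Sum>j\<in>{1..8}. (u $ idx8 i * v $ idx8 j) *\<^sub>R br (E i) (E j))" .
    then have "?f (br (?g u) (?g v)) = (\<Sum>i\<in>{1..8}. \<Sum>j\<in>{1..8}. (u $ idx8 i * v $ idx8 j) *\<^sub>R ?f (br (E i) (E j)))"
      by (simp add: linear_sum[OF linf] linear_scale[OF linf])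
    also have "\<dots> = gb Dm u v"
      unfolding gb_def Dm_def fmap_def by simp
    finally show ?thesis .
  qed
  define \<Phi> where "\<Phi> t A = ?g (phi t (?f A))" for t A
  define \<Psi> where "\<Psi> t A = ?g (phiinv t (?f A))" for t A
  have linPhi: "linear (\<Phi> t)" for t
  proof -
    have "\<Phi> t = ?g \<circ> (phi t \<circ> ?f)" by (simp add: \<Phi>_def fun_eq_iff)
    then show ?thesis using linear_compose[OF linf linear_phi] linear_compose linear_gmap by metis
  qed
  have PsiPhi: "\<Psi> t (\<Phi> t A) = A" if "t \<ge> 1" "A \<in> V" for t A
    using that by (simp add: \<Phi>_def \<Psi>_def fg phiinv_phi gf)
  have PhiPsi: "\<Phi> t (\<Psi> t A) = A" if "t \<ge> 1" "A \<in> V" for t A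
    using that by (simp add: \<Phi>_def \<Psi>_def fg phi_phiinv gf)
  have PhiV: "\<Phi> t A \<in> V" for t A by (simp add: \<Phi>_def gV)
  have PsiV: "\<Psi> t A \<in> V" for t A by (simp add: \<Psi>_def gV)
  have bijPhi: "bij_betw (\<Phi> t) V V" if "t \<ge> 1" for t
    by (rule bij_betw_byWitness[where f'="\<Psi> t"]) (auto simp: PsiPhi PhiPsi that PhiV PsiV)
  have invf: "inv_into V (\<Phi> t) B = \<Psi> t B" if "t \<ge> 1" "B \<in> V" for t B
    by (rule inv_into_f_eq[OF bij_betw_imp_inj_on[OF bijPhi[OF that(1)]]])
       (auto simp: PsiV PhiPsi that)
  define brinf where "brinf X Y = ?g (sc_bracket C (?f X) (?f Y))" for X Y
  have lim: "((\<lambda>t. inv_into V (\<Phi> t) (br (\<Phi> t X) (\<Phi> t Y))) \<longlongrightarrow> brinf X Y) at_top"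
    if X: "X \<in> V" and Y: "Y \<in> V" for X Y
  proof -
    let ?x = "?f X" and ?y = "?f Y"
    have ev: "eventually (\<lambda>t. ?g (phiinv t (gb Dm (phi t ?x) (phi t ?y))) =
                 inv_into V (\<Phi> t) (br (\<Phi> t X) (\<Phi> t Y))) at_top"
    proof (rule eventually_at_top_linorderI[of 1])
      fix t :: real assume t: "t \<ge> 1"
      have "br (\<Phi> t X) (\<Phi> t Y) \<in> V" using brV gV by (simp add: \<Phi>_def)
      then show "?g (phiinv t (gb Dm (phi t ?x) (phi t ?y))) = inv_into V (\<Phi> t) (br (\<Phi> t X) (\<Phi> t Y))"
        using t by (simp add: invf \<Psi>_def \<Phi>_def brg)
    qed
    have vlim: "((\<lambda>t. phiinv t (gb Dm (phi t ?x) (phi t ?y))) \<longlongrightarrow> sc_bracket C ?x ?y) at_top"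
    proof (rule vec_tendstoI)
      fix a :: 8
      obtain m :: nat where m: "m \<in> {1..8}" "a = idx8 m" using idx8_surj by (metis UNIV_I imageE)
      have eq: "phiinv t (gb Dm (phi t ?x) (phi t ?y)) $ idx8 m =
         (\<Sum>i\<in>{1..8}. \<Sum>j\<in>{1..8}. (?x $ idx8 i * ?y $ idx8 j) * (Dm i j m * (sv t i * sv t j / sv t m)))" for t
        using m(1) by (simp add: phiinv_comp gb_comp phi_comp sum_divide_distrib mult_ac)
      have tgt: "sc_bracket C ?x ?y $ idx8 m =
         (\<Sum>i\<in>{1..8}. \<Sum>j\<in>{1..8}. (?x $ idx8 i * ?y $ idx8 j) * antisym_sc C i j m)"
        unfolding sc_gb gb_comp[OF m(1)] by (simp add: mult_ac)
      show "((\<lambda>t. phiinv t (gb Dm (phi t ?x) (phi t ?y)) $ a) \<longlongrightarrow> sc_bracket C ?x ?y $ a) at_top"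
        unfolding m(2) eq tgt
        apply (intro tendsto_sum tendsto_mult_left)
        apply (rule term_lim[OF _ _ m(1)])
        using c1 c2 m(1) by (auto simp: Dm_def)
    qed
    have "((\<lambda>t. ?g (phiinv t (gb Dm (phi t ?x) (phi t ?y)))) \<longlongrightarrow> ?g (sc_bracket C ?x ?y)) at_top"
      by (rule isCont_tendsto_compose[OF _ vlim])
         (simp add: linear_continuous_at linear_conv_bounded_linear[symmetric] linear_gmap)
    then show ?thesis unfolding brinf_def using ev by (rule Lim_transform_eventually)
  qed
  have iso: "lie_iso V brinf UNIV (sc_bracket C) ?f"
    unfolding lie_iso_def
  proof (intro conjI ballI)
    show "linear ?f" by (rule linf)
    show "bij_betw ?f V UNIV"
      by (rule bij_betw_byWitness[where f'="?g"]) (auto simp: gf fg gV)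
    fix X Y assume "X \<in> V" "Y \<in> V"
    show "?f (brinf X Y) = sc_bracket C (?f X) (?f Y)" by (simp add: brinf_def fg)
  qed
  show ?thesis unfolding is_contraction_of_def
    using linPhi bijPhi lim iso by blast
qed



definition m3 :: "'a::zero \<Rightarrow> 'a \<Rightarrow> 'a \<Rightarrow> 'a \<Rightarrow> 'a \<Rightarrow> 'a \<Rightarrow> 'a \<Rightarrow> 'a \<Rightarrow> 'a \<Rightarrow> 'a^3^3" where
  "m3 a b c d e f g h i = (\<chi> r s. if r = 1 then (if s = 1 then a else if s = 2 then b else c)
     else if r = 2 then (if s = 1 then d else if s = 2 then e else f)
     else (if s = 1 then g else if s = 2 then h else i))"

lemma m3_simps[simp]:
  "m3 a b c d e f g h i $ 1 $ 1 = a" "m3 a b c d e f g h i $ 1 $ 2 = b" "m3 a b c d e f g h i $ 1 $ 3 = c"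
  "m3 a b c d e f g h i $ 2 $ 1 = d" "m3 a b c d e f g h i $ 2 $ 2 = e" "m3 a b c d e f g h i $ 2 $ 3 = f"
  "m3 a b c d e f g h i $ 3 $ 1 = g" "m3 a b c d e f g h i $ 3 $ 2 = h" "m3 a b c d e f g h i $ 3 $ 3 = i"
  by (simp_all add: m3_def)

lemma mm_entry: "(A ** B) $ r $ s = A$r$1 * B$1$s + A$r$2 * B$2$s + A$r$3 * B$3$s"
  for A B :: "'a::semiring_1^3^3"
  by (simp add: matrix_matrix_mult_def sum_3)

lemma comm_entry: "commutator A B $ r $ s = (A$r$1 * B$1$s + A$r$2 * B$2$s + A$r$3 * B$3$s)
   - (B$r$1 * A$1$s + B$r$2 * A$2$s + B$r$3 * A$3$s)"
  for A B :: "'a::comm_ring_1^3^3"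
  by (simp add: commutator_def mm_entry)

definition okc :: "(nat \<Rightarrow> 'a \<Rightarrow> real) \<Rightarrow> (nat \<Rightarrow> 'a) \<Rightarrow> ('a \<Rightarrow> 'a \<Rightarrow> 'a) \<Rightarrow> (nat \<Rightarrow> nat \<Rightarrow> nat \<Rightarrow> real) \<Rightarrow> nat \<Rightarrow> nat \<Rightarrow> bool" where
  "okc c E br C i j \<longleftrightarrow> (\<forall>k\<in>{1..8}. (i \<le> 3 \<and> j \<le> 3 \<and> 3 < k \<longrightarrow> c k (br (E i) (E j)) = 0) \<and>
      antisym_sc C i j k = (if (i \<le> 3 \<and> j \<le> 3 \<and> k \<le> 3) \<or> (3 < k \<and> (i \<le> 3) \<noteq> (j \<le> 3))
         then c k (br (E i) (E j)) else 0))"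

lemma gmap_fmap: "gmap E (fmap c A) = (\<Sum>i\<in>{1..8}. c i A *\<^sub>R E i)"
  unfolding gmap_def by (rule sum.cong) (simp_all add: fmap_comp)

lemma abstract2:
  fixes V :: "'a::real_normed_vector set" and br :: "'a \<Rightarrow> 'a \<Rightarrow> 'a"
    and c :: "nat \<Rightarrow> 'a \<Rightarrow> real" and E :: "nat \<Rightarrow> 'a"
  assumes linc: "\<And>k. k \<in> {1..8} \<Longrightarrow> linear (c k)"
  and gf: "\<And>A. A \<in> V \<Longrightarrow> (\<Sum>i\<in>{1..8}. c i A *\<^sub>R E i) = A"
  and gV: "\<And>x. gmap E x \<in> V"
  and cE: "\<forall>i\<in>{1..8}. \<forall>k\<in>{1..8}. c k (E i) = (if i = k then 1 else 0)"
  and bil: "bilinear br"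
  and brV: "\<And>A B. A \<in> V \<Longrightarrow> B \<in> V \<Longrightarrow> br A B \<in> V"
  and ok: "\<forall>i\<in>{1..8}. \<forall>j\<in>{1..8}. okc c E br C i j"
  shows "is_contraction_of UNIV (sc_bracket C) V br"
  apply (rule abstract[where c=c and E=E])
  using linc gf gV cE bil brV ok by (auto simp: gmap_fmap okc_def)

lemma mm_add_l: "(A + B) ** C = A ** C + B ** C" for A B C :: "'a::semiring_1^'n^'n"
  by (simp add: matrix_matrix_mult_def vec_eq_iff distrib_right sum.distrib)
lemma mm_scaleR_l: "(r *\<^sub>R A) ** B = r *\<^sub>R (A ** B)" for A B :: "'a::real_algebra_1^'n^'n"
  by (simp add: matrix_matrix_mult_def vec_eq_iff scaleR_sum_right)
lemma mm_scaleR_r: "A ** (r *\<^sub>R B) = r *\<^sub>R (A ** B)" for A B :: "'a::real_algebra_1^'n^'n"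
  by (simp add: matrix_matrix_mult_def vec_eq_iff scaleR_sum_right)
lemma mm_neg_l: "(- A) ** B = - (A ** B)" for A B :: "'a::ring_1^'n^'n"
  by (simp add: matrix_matrix_mult_def vec_eq_iff sum_negf)
lemma mm_neg_r: "A ** (- B) = - (A ** B)" for A B :: "'a::ring_1^'n^'n"
  by (simp add: matrix_matrix_mult_def vec_eq_iff sum_negf)
lemma mm_diff_l: "(A - B) ** C = A ** C - B ** C" for A B C :: "'a::ring_1^'n^'n"
  by (simp add: matrix_matrix_mult_def vec_eq_iff left_diff_distrib sum_subtractf)
lemma mm_diff_r: "C ** (A - B) = C ** A - C ** B" for A B C :: "'a::ring_1^'n^'n"
  by (simp add: matrix_matrix_mult_def vec_eq_iff right_diff_distrib sum_subtractf)

lemma bilinear_comm: "bilinear (commutator :: 'a::{real_algebra_1,comm_ring_1}^'n^'n \<Rightarrow> _)"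
  unfolding bilinear_def commutator_def
  by (auto intro!: linearI simp: matrix_add_ldistrib mm_add_l mm_scaleR_l mm_scaleR_r scaleR_diff_right)

lemma trace_comm: "mtrace (commutator A B) = 0" for A B :: "'a::comm_ring_1^3^3"
  by (simp add: mtrace_def sum_3 comm_entry algebra_simps)

lemma adj_mm: "adjoint3 (A ** B) = adjoint3 B ** adjoint3 A"
  by (simp add: adjoint3_def vec_eq_iff mm_entry mult.commute add.commute add.left_commute)
lemma adj_diff: "adjoint3 (A - B) = adjoint3 A - adjoint3 B"
  by (simp add: adjoint3_def vec_eq_iff)

lemma su3_comm: "A \<in> su3 \<Longrightarrow> B \<in> su3 \<Longrightarrow> commutator A B \<in> su3"
  by (simp add: su3_def trace_comm[unfolded commutator_def] commutator_def adj_diff adj_mm mm_neg_l mm_neg_r)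

lemma adjJ: "adjoint3 A ** J21 = - (J21 ** A) \<Longrightarrow> adjoint3 B ** J21 = - (J21 ** B)
   \<Longrightarrow> adjoint3 (A ** B) ** J21 = J21 ** (B ** A)"
proof -
  assume a: "adjoint3 A ** J21 = - (J21 ** A)" and b: "adjoint3 B ** J21 = - (J21 ** B)"
  have "adjoint3 (A ** B) ** J21 = adjoint3 B ** (adjoint3 A ** J21)" by (simp add: adj_mm matrix_mul_assoc)
  also have "\<dots> = - ((adjoint3 B ** J21) ** A)" by (simp add: a mm_neg_r matrix_mul_assoc)
  also have "\<dots> = J21 ** (B ** A)" by (simp add: b mm_neg_l matrix_mul_assoc)
  finally show ?thesis .
qed

lemma su21_comm: "A \<in> su21 \<Longrightarrow> B \<in> su21 \<Longrightarrow> commutator A B \<in> su21"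
proof -
  assume A: "A \<in> su21" and B: "B \<in> su21"
  have a: "adjoint3 A ** J21 = - (J21 ** A)" using A by (simp add: su21_def eq_neg_iff_add_eq_0)
  have b: "adjoint3 B ** J21 = - (J21 ** B)" using B by (simp add: su21_def eq_neg_iff_add_eq_0)
  show ?thesis unfolding su21_def
    by (simp add: trace_comm[unfolded commutator_def] commutator_def adj_diff mm_diff_l mm_diff_r adjJ[OF a b] adjJ[OF b a])
qed

lemma sl3_comm: "A \<in> sl3R \<Longrightarrow> B \<in> sl3R \<Longrightarrow> commutator A B \<in> sl3R"
  by (simp add: sl3R_def trace_comm)

definition Esu3 :: "nat \<Rightarrow> complex^3^3" where
  "Esu3 i = (if i = 1 then m3 0 (Complex 0 (-(1/2))) 0 (Complex 0 (-(1/2))) 0 0 0 0 0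
    else if i = 2 then m3 0 (-(1/2)) 0 (1/2) 0 0 0 0 0
    else if i = 3 then m3 (Complex 0 (-(1/2))) 0 0 0 (Complex 0 (1/2)) 0 0 0 0
    else if i = 4 then m3 0 0 (-1) 0 0 0 1 0 0
    else if i = 5 then m3 0 0 0 0 0 (-1) 0 1 0
    else if i = 6 then m3 0 0 (Complex 0 1) 0 0 0 (Complex 0 1) 0 0
    else if i = 7 then m3 0 0 0 0 0 (Complex 0 1) 0 (Complex 0 1) 0
    else m3 (Complex 0 1) 0 0 0 (Complex 0 1) 0 0 0 (Complex 0 (-2)))"

lemma Esu3_1: "Esu3 (Suc 0) = m3 0 (Complex 0 (-(1/2))) 0 (Complex 0 (-(1/2))) 0 0 0 0 0" by (simp add: Esu3_def)
lemma Esu3_2: "Esu3 2 = m3 0 (-(1/2)) 0 (1/2) 0 0 0 0 0" by (simp add: Esu3_def)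
lemma Esu3_3: "Esu3 3 = m3 (Complex 0 (-(1/2))) 0 0 0 (Complex 0 (1/2)) 0 0 0 0" by (simp add: Esu3_def)
lemma Esu3_4: "Esu3 4 = m3 0 0 (-1) 0 0 0 1 0 0" by (simp add: Esu3_def)
lemma Esu3_5: "Esu3 5 = m3 0 0 0 0 0 (-1) 0 1 0" by (simp add: Esu3_def)
lemma Esu3_6: "Esu3 6 = m3 0 0 (Complex 0 1) 0 0 0 (Complex 0 1) 0 0" by (simp add: Esu3_def)
lemma Esu3_7: "Esu3 7 = m3 0 0 0 0 0 (Complex 0 1) 0 (Complex 0 1) 0" by (simp add: Esu3_def)
lemma Esu3_8: "Esu3 8 = m3 (Complex 0 1) 0 0 0 (Complex 0 1) 0 0 0 (Complex 0 (-2))" by (simp add: Esu3_def)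
definition csu3 :: "nat \<Rightarrow> complex^3^3 \<Rightarrow> real" where
  "csu3 k A = (if k = 1 then -2 * Im (A$1$2)
    else if k = 2 then -2 * Re (A$1$2)
    else if k = 3 then Im (A$2$2) - Im (A$1$1)
    else if k = 4 then - Re (A$1$3)
    else if k = 5 then - Re (A$2$3)
    else if k = 6 then Im (A$1$3)
    else if k = 7 then Im (A$2$3)
    else - Im (A$3$3) / 2)"

lemma lin_su3: "k \<in> {1..8} \<Longrightarrow> linear (csu3 k)"
  unfolding nat8 by (auto intro!: linearI simp: csu3_def field_simps)

lemma cE_su3_1: "\<forall>k\<in>{1..8}. csu3 k (Esu3 1) = (if 1 = k then 1 else 0)"
  unfolding nat8 by (simp add: csu3_def Esu3_1)
lemma cE_su3_2: "\<forall>k\<in>{1..8}. csu3 k (Esu3 2) = (if 2 = k then 1 else 0)"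
  unfolding nat8 by (simp add: csu3_def Esu3_2)
lemma cE_su3_3: "\<forall>k\<in>{1..8}. csu3 k (Esu3 3) = (if 3 = k then 1 else 0)"
  unfolding nat8 by (simp add: csu3_def Esu3_3)
lemma cE_su3_4: "\<forall>k\<in>{1..8}. csu3 k (Esu3 4) = (if 4 = k then 1 else 0)"
  unfolding nat8 by (simp add: csu3_def Esu3_4)
lemma cE_su3_5: "\<forall>k\<in>{1..8}. csu3 k (Esu3 5) = (if 5 = k then 1 else 0)"
  unfolding nat8 by (simp add: csu3_def Esu3_5)
lemma cE_su3_6: "\<forall>k\<in>{1..8}. csu3 k (Esu3 6) = (if 6 = k then 1 else 0)"
  unfolding nat8 by (simp add: csu3_def Esu3_6)
lemma cE_su3_7: "\<forall>k\<in>{1..8}. csu3 k (Esu3 7) = (if 7 = k then 1 else 0)"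
  unfolding nat8 by (simp add: csu3_def Esu3_7)
lemma cE_su3_8: "\<forall>k\<in>{1..8}. csu3 k (Esu3 8) = (if 8 = k then 1 else 0)"
  unfolding nat8 by (simp add: csu3_def Esu3_8)
lemma cE_su3: "\<forall>i\<in>{1..8}. \<forall>k\<in>{1..8}. csu3 k (Esu3 i) = (if i = k then 1 else 0)"
  unfolding nat8 using cE_su3_1 cE_su3_2 cE_su3_3 cE_su3_4 cE_su3_5 cE_su3_6 cE_su3_7 cE_su3_8 by simp

lemma ok_su3_1_1: "okc csu3 Esu3 commutator C_L72 1 1"
  unfolding okc_def nat8 by (simp add: csu3_def Esu3_1  comm_entry antisym_sc_def C_L72_def sc_table_def)
lemma ok_su3_1_2: "okc csu3 Esu3 commutator C_L72 1 2"
  unfolding okc_def nat8 by (simp add: csu3_def Esu3_1 Esu3_2 comm_entry antisym_sc_def C_L72_def sc_table_def)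
lemma ok_su3_1_3: "okc csu3 Esu3 commutator C_L72 1 3"
  unfolding okc_def nat8 by (simp add: csu3_def Esu3_1 Esu3_3 comm_entry antisym_sc_def C_L72_def sc_table_def)
lemma ok_su3_1_4: "okc csu3 Esu3 commutator C_L72 1 4"
  unfolding okc_def nat8 by (simp add: csu3_def Esu3_1 Esu3_4 comm_entry antisym_sc_def C_L72_def sc_table_def)
lemma ok_su3_1_5: "okc csu3 Esu3 commutator C_L72 1 5"
  unfolding okc_def nat8 by (simp add: csu3_def Esu3_1 Esu3_5 comm_entry antisym_sc_def C_L72_def sc_table_def)
lemma ok_su3_1_6: "okc csu3 Esu3 commutator C_L72 1 6"
  unfolding okc_def nat8 by (simp add: csu3_def Esu3_1 Esu3_6 comm_entry antisym_sc_def C_L72_def sc_table_def)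
lemma ok_su3_1_7: "okc csu3 Esu3 commutator C_L72 1 7"
  unfolding okc_def nat8 by (simp add: csu3_def Esu3_1 Esu3_7 comm_entry antisym_sc_def C_L72_def sc_table_def)
lemma ok_su3_1_8: "okc csu3 Esu3 commutator C_L72 1 8"
  unfolding okc_def nat8 by (simp add: csu3_def Esu3_1 Esu3_8 comm_entry antisym_sc_def C_L72_def sc_table_def)
lemma ok_su3_2_1: "okc csu3 Esu3 commutator C_L72 2 1"
  unfolding okc_def nat8 by (simp add: csu3_def Esu3_2 Esu3_1 comm_entry antisym_sc_def C_L72_def sc_table_def)
lemma ok_su3_2_2: "okc csu3 Esu3 commutator C_L72 2 2"
  unfolding okc_def nat8 by (simp add: csu3_def Esu3_2  comm_entry antisym_sc_def C_L72_def sc_table_def)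
lemma ok_su3_2_3: "okc csu3 Esu3 commutator C_L72 2 3"
  unfolding okc_def nat8 by (simp add: csu3_def Esu3_2 Esu3_3 comm_entry antisym_sc_def C_L72_def sc_table_def)
lemma ok_su3_2_4: "okc csu3 Esu3 commutator C_L72 2 4"
  unfolding okc_def nat8 by (simp add: csu3_def Esu3_2 Esu3_4 comm_entry antisym_sc_def C_L72_def sc_table_def)
lemma ok_su3_2_5: "okc csu3 Esu3 commutator C_L72 2 5"
  unfolding okc_def nat8 by (simp add: csu3_def Esu3_2 Esu3_5 comm_entry antisym_sc_def C_L72_def sc_table_def)
lemma ok_su3_2_6: "okc csu3 Esu3 commutator C_L72 2 6"
  unfolding okc_def nat8 by (simp add: csu3_def Esu3_2 Esu3_6 comm_entry antisym_sc_def C_L72_def sc_table_def)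
lemma ok_su3_2_7: "okc csu3 Esu3 commutator C_L72 2 7"
  unfolding okc_def nat8 by (simp add: csu3_def Esu3_2 Esu3_7 comm_entry antisym_sc_def C_L72_def sc_table_def)
lemma ok_su3_2_8: "okc csu3 Esu3 commutator C_L72 2 8"
  unfolding okc_def nat8 by (simp add: csu3_def Esu3_2 Esu3_8 comm_entry antisym_sc_def C_L72_def sc_table_def)
lemma ok_su3_3_1: "okc csu3 Esu3 commutator C_L72 3 1"
  unfolding okc_def nat8 by (simp add: csu3_def Esu3_3 Esu3_1 comm_entry antisym_sc_def C_L72_def sc_table_def)
lemma ok_su3_3_2: "okc csu3 Esu3 commutator C_L72 3 2"
  unfolding okc_def nat8 by (simp add: csu3_def Esu3_3 Esu3_2 comm_entry antisym_sc_def C_L72_def sc_table_def)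
lemma ok_su3_3_3: "okc csu3 Esu3 commutator C_L72 3 3"
  unfolding okc_def nat8 by (simp add: csu3_def Esu3_3  comm_entry antisym_sc_def C_L72_def sc_table_def)
lemma ok_su3_3_4: "okc csu3 Esu3 commutator C_L72 3 4"
  unfolding okc_def nat8 by (simp add: csu3_def Esu3_3 Esu3_4 comm_entry antisym_sc_def C_L72_def sc_table_def)
lemma ok_su3_3_5: "okc csu3 Esu3 commutator C_L72 3 5"
  unfolding okc_def nat8 by (simp add: csu3_def Esu3_3 Esu3_5 comm_entry antisym_sc_def C_L72_def sc_table_def)
lemma ok_su3_3_6: "okc csu3 Esu3 commutator C_L72 3 6"
  unfolding okc_def nat8 by (simp add: csu3_def Esu3_3 Esu3_6 comm_entry antisym_sc_def C_L72_def sc_table_def)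
lemma ok_su3_3_7: "okc csu3 Esu3 commutator C_L72 3 7"
  unfolding okc_def nat8 by (simp add: csu3_def Esu3_3 Esu3_7 comm_entry antisym_sc_def C_L72_def sc_table_def)
lemma ok_su3_3_8: "okc csu3 Esu3 commutator C_L72 3 8"
  unfolding okc_def nat8 by (simp add: csu3_def Esu3_3 Esu3_8 comm_entry antisym_sc_def C_L72_def sc_table_def)
lemma ok_su3_4_1: "okc csu3 Esu3 commutator C_L72 4 1"
  unfolding okc_def nat8 by (simp add: csu3_def Esu3_4 Esu3_1 comm_entry antisym_sc_def C_L72_def sc_table_def)
lemma ok_su3_4_2: "okc csu3 Esu3 commutator C_L72 4 2"
  unfolding okc_def nat8 by (simp add: csu3_def Esu3_4 Esu3_2 comm_entry antisym_sc_def C_L72_def sc_table_def)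
lemma ok_su3_4_3: "okc csu3 Esu3 commutator C_L72 4 3"
  unfolding okc_def nat8 by (simp add: csu3_def Esu3_4 Esu3_3 comm_entry antisym_sc_def C_L72_def sc_table_def)
lemma ok_su3_4_4: "okc csu3 Esu3 commutator C_L72 4 4"
  unfolding okc_def nat8 by (simp add: csu3_def Esu3_4  comm_entry antisym_sc_def C_L72_def sc_table_def)
lemma ok_su3_4_5: "okc csu3 Esu3 commutator C_L72 4 5"
  unfolding okc_def nat8 by (simp add: csu3_def Esu3_4 Esu3_5 comm_entry antisym_sc_def C_L72_def sc_table_def)
lemma ok_su3_4_6: "okc csu3 Esu3 commutator C_L72 4 6"
  unfolding okc_def nat8 by (simp add: csu3_def Esu3_4 Esu3_6 comm_entry antisym_sc_def C_L72_def sc_table_def)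
lemma ok_su3_4_7: "okc csu3 Esu3 commutator C_L72 4 7"
  unfolding okc_def nat8 by (simp add: csu3_def Esu3_4 Esu3_7 comm_entry antisym_sc_def C_L72_def sc_table_def)
lemma ok_su3_4_8: "okc csu3 Esu3 commutator C_L72 4 8"
  unfolding okc_def nat8 by (simp add: csu3_def Esu3_4 Esu3_8 comm_entry antisym_sc_def C_L72_def sc_table_def)
lemma ok_su3_5_1: "okc csu3 Esu3 commutator C_L72 5 1"
  unfolding okc_def nat8 by (simp add: csu3_def Esu3_5 Esu3_1 comm_entry antisym_sc_def C_L72_def sc_table_def)
lemma ok_su3_5_2: "okc csu3 Esu3 commutator C_L72 5 2"
  unfolding okc_def nat8 by (simp add: csu3_def Esu3_5 Esu3_2 comm_entry antisym_sc_def C_L72_def sc_table_def)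
lemma ok_su3_5_3: "okc csu3 Esu3 commutator C_L72 5 3"
  unfolding okc_def nat8 by (simp add: csu3_def Esu3_5 Esu3_3 comm_entry antisym_sc_def C_L72_def sc_table_def)
lemma ok_su3_5_4: "okc csu3 Esu3 commutator C_L72 5 4"
  unfolding okc_def nat8 by (simp add: csu3_def Esu3_5 Esu3_4 comm_entry antisym_sc_def C_L72_def sc_table_def)
lemma ok_su3_5_5: "okc csu3 Esu3 commutator C_L72 5 5"
  unfolding okc_def nat8 by (simp add: csu3_def Esu3_5  comm_entry antisym_sc_def C_L72_def sc_table_def)
lemma ok_su3_5_6: "okc csu3 Esu3 commutator C_L72 5 6"
  unfolding okc_def nat8 by (simp add: csu3_def Esu3_5 Esu3_6 comm_entry antisym_sc_def C_L72_def sc_table_def)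
lemma ok_su3_5_7: "okc csu3 Esu3 commutator C_L72 5 7"
  unfolding okc_def nat8 by (simp add: csu3_def Esu3_5 Esu3_7 comm_entry antisym_sc_def C_L72_def sc_table_def)
lemma ok_su3_5_8: "okc csu3 Esu3 commutator C_L72 5 8"
  unfolding okc_def nat8 by (simp add: csu3_def Esu3_5 Esu3_8 comm_entry antisym_sc_def C_L72_def sc_table_def)
lemma ok_su3_6_1: "okc csu3 Esu3 commutator C_L72 6 1"
  unfolding okc_def nat8 by (simp add: csu3_def Esu3_6 Esu3_1 comm_entry antisym_sc_def C_L72_def sc_table_def)
lemma ok_su3_6_2: "okc csu3 Esu3 commutator C_L72 6 2"
  unfolding okc_def nat8 by (simp add: csu3_def Esu3_6 Esu3_2 comm_entry antisym_sc_def C_L72_def sc_table_def)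
lemma ok_su3_6_3: "okc csu3 Esu3 commutator C_L72 6 3"
  unfolding okc_def nat8 by (simp add: csu3_def Esu3_6 Esu3_3 comm_entry antisym_sc_def C_L72_def sc_table_def)
lemma ok_su3_6_4: "okc csu3 Esu3 commutator C_L72 6 4"
  unfolding okc_def nat8 by (simp add: csu3_def Esu3_6 Esu3_4 comm_entry antisym_sc_def C_L72_def sc_table_def)
lemma ok_su3_6_5: "okc csu3 Esu3 commutator C_L72 6 5"
  unfolding okc_def nat8 by (simp add: csu3_def Esu3_6 Esu3_5 comm_entry antisym_sc_def C_L72_def sc_table_def)
lemma ok_su3_6_6: "okc csu3 Esu3 commutator C_L72 6 6"
  unfolding okc_def nat8 by (simp add: csu3_def Esu3_6  comm_entry antisym_sc_def C_L72_def sc_table_def)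
lemma ok_su3_6_7: "okc csu3 Esu3 commutator C_L72 6 7"
  unfolding okc_def nat8 by (simp add: csu3_def Esu3_6 Esu3_7 comm_entry antisym_sc_def C_L72_def sc_table_def)
lemma ok_su3_6_8: "okc csu3 Esu3 commutator C_L72 6 8"
  unfolding okc_def nat8 by (simp add: csu3_def Esu3_6 Esu3_8 comm_entry antisym_sc_def C_L72_def sc_table_def)
lemma ok_su3_7_1: "okc csu3 Esu3 commutator C_L72 7 1"
  unfolding okc_def nat8 by (simp add: csu3_def Esu3_7 Esu3_1 comm_entry antisym_sc_def C_L72_def sc_table_def)
lemma ok_su3_7_2: "okc csu3 Esu3 commutator C_L72 7 2"
  unfolding okc_def nat8 by (simp add: csu3_def Esu3_7 Esu3_2 comm_entry antisym_sc_def C_L72_def sc_table_def)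
lemma ok_su3_7_3: "okc csu3 Esu3 commutator C_L72 7 3"
  unfolding okc_def nat8 by (simp add: csu3_def Esu3_7 Esu3_3 comm_entry antisym_sc_def C_L72_def sc_table_def)
lemma ok_su3_7_4: "okc csu3 Esu3 commutator C_L72 7 4"
  unfolding okc_def nat8 by (simp add: csu3_def Esu3_7 Esu3_4 comm_entry antisym_sc_def C_L72_def sc_table_def)
lemma ok_su3_7_5: "okc csu3 Esu3 commutator C_L72 7 5"
  unfolding okc_def nat8 by (simp add: csu3_def Esu3_7 Esu3_5 comm_entry antisym_sc_def C_L72_def sc_table_def)
lemma ok_su3_7_6: "okc csu3 Esu3 commutator C_L72 7 6"
  unfolding okc_def nat8 by (simp add: csu3_def Esu3_7 Esu3_6 comm_entry antisym_sc_def C_L72_def sc_table_def)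
lemma ok_su3_7_7: "okc csu3 Esu3 commutator C_L72 7 7"
  unfolding okc_def nat8 by (simp add: csu3_def Esu3_7  comm_entry antisym_sc_def C_L72_def sc_table_def)
lemma ok_su3_7_8: "okc csu3 Esu3 commutator C_L72 7 8"
  unfolding okc_def nat8 by (simp add: csu3_def Esu3_7 Esu3_8 comm_entry antisym_sc_def C_L72_def sc_table_def)
lemma ok_su3_8_1: "okc csu3 Esu3 commutator C_L72 8 1"
  unfolding okc_def nat8 by (simp add: csu3_def Esu3_8 Esu3_1 comm_entry antisym_sc_def C_L72_def sc_table_def)
lemma ok_su3_8_2: "okc csu3 Esu3 commutator C_L72 8 2"
  unfolding okc_def nat8 by (simp add: csu3_def Esu3_8 Esu3_2 comm_entry antisym_sc_def C_L72_def sc_table_def)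
lemma ok_su3_8_3: "okc csu3 Esu3 commutator C_L72 8 3"
  unfolding okc_def nat8 by (simp add: csu3_def Esu3_8 Esu3_3 comm_entry antisym_sc_def C_L72_def sc_table_def)
lemma ok_su3_8_4: "okc csu3 Esu3 commutator C_L72 8 4"
  unfolding okc_def nat8 by (simp add: csu3_def Esu3_8 Esu3_4 comm_entry antisym_sc_def C_L72_def sc_table_def)
lemma ok_su3_8_5: "okc csu3 Esu3 commutator C_L72 8 5"
  unfolding okc_def nat8 by (simp add: csu3_def Esu3_8 Esu3_5 comm_entry antisym_sc_def C_L72_def sc_table_def)
lemma ok_su3_8_6: "okc csu3 Esu3 commutator C_L72 8 6"
  unfolding okc_def nat8 by (simp add: csu3_def Esu3_8 Esu3_6 comm_entry antisym_sc_def C_L72_def sc_table_def)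
lemma ok_su3_8_7: "okc csu3 Esu3 commutator C_L72 8 7"
  unfolding okc_def nat8 by (simp add: csu3_def Esu3_8 Esu3_7 comm_entry antisym_sc_def C_L72_def sc_table_def)
lemma ok_su3_8_8: "okc csu3 Esu3 commutator C_L72 8 8"
  unfolding okc_def nat8 by (simp add: csu3_def Esu3_8  comm_entry antisym_sc_def C_L72_def sc_table_def)
lemma ok_su3: "\<forall>i\<in>{1..8}. \<forall>j\<in>{1..8}. okc csu3 Esu3 commutator C_L72 i j"
  unfolding nat8 using ok_su3_1_1 ok_su3_1_2 ok_su3_1_3 ok_su3_1_4 ok_su3_1_5 ok_su3_1_6 ok_su3_1_7 ok_su3_1_8 ok_su3_2_1 ok_su3_2_2 ok_su3_2_3 ok_su3_2_4 ok_su3_2_5 ok_su3_2_6 ok_su3_2_7 ok_su3_2_8 ok_su3_3_1 ok_su3_3_2 ok_su3_3_3 ok_su3_3_4 ok_su3_3_5 ok_su3_3_6 ok_su3_3_7 ok_su3_3_8 ok_su3_4_1 ok_su3_4_2 ok_su3_4_3 ok_su3_4_4 ok_su3_4_5 ok_su3_4_6 ok_su3_4_7 ok_su3_4_8 ok_su3_5_1 ok_su3_5_2 ok_su3_5_3 ok_su3_5_4 ok_su3_5_5 ok_su3_5_6 ok_su3_5_7 ok_su3_5_8 ok_su3_6_1 ok_su3_6_2 ok_su3_6_3 ok_su3_6_4 ok_su3_6_5 ok_su3_6_6 ok_su3_6_7 ok_su3_6_8 ok_su3_7_1 ok_su3_7_2 ok_su3_7_3 ok_su3_7_4 ok_su3_7_5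 ok_su3_7_6 ok_su3_7_7 ok_su3_7_8 ok_su3_8_1 ok_su3_8_2 ok_su3_8_3 ok_su3_8_4 ok_su3_8_5 ok_su3_8_6 ok_su3_8_7 ok_su3_8_8 by simp


lemma gsum_su3: "(\<Sum>i\<in>{1..8}. x i *\<^sub>R Esu3 i) = m3 (Complex 0 ((-(1/2)) * x 3 + 1 * x 8)) (Complex ((-(1/2)) * x 2) ((-(1/2)) * x 1)) (Complex ((-1) * x 4) (1 * x 6)) (Complex ((1/2) * x 2) ((-(1/2)) * x 1)) (Complex 0 ((1/2) * x 3 + 1 * x 8)) (Complex ((-1) * x 5) (1 * x 7)) (Complex (1 * x 4) (1 * x 6)) (Complex (1 * x 5) (1 * x 7)) (Complex 0 ((-2) * x 8))"
  unfolding nat8 by (simp add: Esu3_1 Esu3_2 Esu3_3 Esu3_4 Esu3_5 Esu3_6 Esu3_7 Esu3_8 vec_eq_iff forall_3 complex_eq_iff algebra_simps)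

lemma gf_su3: "A \<in> su3 \<Longrightarrow> (\<Sum>i\<in>{1..8}. csu3 i A *\<^sub>R Esu3 i) = A"
proof -
  assume A: "A \<in> su3"
  have H: "\<forall>r s. cnj (A $ s $ r) = - (A $ r $ s)"
    using A unfolding su3_def by (auto simp: vec_eq_iff adjoint3_def)
  have H': "Re (A$1$1) = 0 \<and> Re (A$2$2) = 0 \<and> Re (A$3$3) = 0 \<and> Re (A$2$1) = - Re (A$1$2) \<and> Im (A$2$1) = Im (A$1$2)
    \<and> Re (A$3$1) = - Re (A$1$3) \<and> Im (A$3$1) = Im (A$1$3) \<and> Re (A$3$2) = - Re (A$2$3) \<and> Im (A$3$2) = Im (A$2$3)"
    using H[rule_format, of 1 1] H[rule_format, of 2 2] H[rule_format, of 3 3] H[rule_format, of 1 2]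
      H[rule_format, of 1 3] H[rule_format, of 2 3] by (simp add: complex_eq_iff)
  have T: "A$1$1 + A$2$2 + A$3$3 = 0" using A by (simp add: su3_def mtrace_def sum_3)
  have T': "Im (A$3$3) = - Im (A$1$1) - Im (A$2$2)" using T by (simp add: complex_eq_iff)
  show ?thesis
    unfolding gsum_su3 using H' T'
    by (simp add: csu3_def vec_eq_iff forall_3 complex_eq_iff field_simps)
qed

lemma gV_su3: "gmap Esu3 x \<in> su3"
  unfolding gmap_def gsum_su3
  by (simp add: su3_def mtrace_def sum_3 adjoint3_def vec_eq_iff forall_3 complex_eq_iff)

lemma contr_su3: "is_contraction_of UNIV L72_L1 su3 commutator"
  unfolding L72_L1_def
  by (rule abstract2[where c=csu3 and E=Esu3, OF lin_su3 gf_su3 gV_su3 cE_su3 bilinear_comm su3_comm ok_su3])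


definition Esu21a :: "nat \<Rightarrow> complex^3^3" where
  "Esu21a i = (if i = 1 then m3 0 (Complex 0 (-(1/2))) 0 (Complex 0 (-(1/2))) 0 0 0 0 0
    else if i = 2 then m3 0 (-(1/2)) 0 (1/2) 0 0 0 0 0
    else if i = 3 then m3 (Complex 0 (-(1/2))) 0 0 0 (Complex 0 (1/2)) 0 0 0 0
    else if i = 4 then m3 0 0 (-1) 0 0 0 (-1) 0 0
    else if i = 5 then m3 0 0 0 0 0 (-1) 0 (-1) 0
    else if i = 6 then m3 0 0 (Complex 0 1) 0 0 0 (Complex 0 (-1)) 0 0
    else if i = 7 then m3 0 0 0 0 0 (Complex 0 1) 0 (Complex 0 (-1)) 0
    else m3 (Complex 0 1) 0 0 0 (Complex 0 1) 0 0 0 (Complex 0 (-2)))"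

lemma Esu21a_1: "Esu21a (Suc 0) = m3 0 (Complex 0 (-(1/2))) 0 (Complex 0 (-(1/2))) 0 0 0 0 0" by (simp add: Esu21a_def)
lemma Esu21a_2: "Esu21a 2 = m3 0 (-(1/2)) 0 (1/2) 0 0 0 0 0" by (simp add: Esu21a_def)
lemma Esu21a_3: "Esu21a 3 = m3 (Complex 0 (-(1/2))) 0 0 0 (Complex 0 (1/2)) 0 0 0 0" by (simp add: Esu21a_def)
lemma Esu21a_4: "Esu21a 4 = m3 0 0 (-1) 0 0 0 (-1) 0 0" by (simp add: Esu21a_def)
lemma Esu21a_5: "Esu21a 5 = m3 0 0 0 0 0 (-1) 0 (-1) 0" by (simp add: Esu21a_def)
lemma Esu21a_6: "Esu21a 6 = m3 0 0 (Complex 0 1) 0 0 0 (Complex 0 (-1)) 0 0" by (simp add: Esu21a_def)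
lemma Esu21a_7: "Esu21a 7 = m3 0 0 0 0 0 (Complex 0 1) 0 (Complex 0 (-1)) 0" by (simp add: Esu21a_def)
lemma Esu21a_8: "Esu21a 8 = m3 (Complex 0 1) 0 0 0 (Complex 0 1) 0 0 0 (Complex 0 (-2))" by (simp add: Esu21a_def)
definition csu21a :: "nat \<Rightarrow> complex^3^3 \<Rightarrow> real" where
  "csu21a k A = (if k = 1 then -2 * Im (A$1$2)
    else if k = 2 then -2 * Re (A$1$2)
    else if k = 3 then Im (A$2$2) - Im (A$1$1)
    else if k = 4 then - Re (A$1$3)
    else if k = 5 then - Re (A$2$3)
    else if k = 6 then Im (A$1$3)
    else if k = 7 then Im (A$2$3)
    else - Im (A$3$3) / 2)"

lemma lin_su21a: "k \<in> {1..8} \<Longrightarrow> linear (csu21a k)"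
  unfolding nat8 by (auto intro!: linearI simp: csu21a_def field_simps)

lemma cE_su21a_1: "\<forall>k\<in>{1..8}. csu21a k (Esu21a 1) = (if 1 = k then 1 else 0)"
  unfolding nat8 by (simp add: csu21a_def Esu21a_1)
lemma cE_su21a_2: "\<forall>k\<in>{1..8}. csu21a k (Esu21a 2) = (if 2 = k then 1 else 0)"
  unfolding nat8 by (simp add: csu21a_def Esu21a_2)
lemma cE_su21a_3: "\<forall>k\<in>{1..8}. csu21a k (Esu21a 3) = (if 3 = k then 1 else 0)"
  unfolding nat8 by (simp add: csu21a_def Esu21a_3)
lemma cE_su21a_4: "\<forall>k\<in>{1..8}. csu21a k (Esu21a 4) = (if 4 = k then 1 else 0)"
  unfolding nat8 by (simp add: csu21a_def Esu21a_4)
lemma cE_su21a_5: "\<forall>k\<in>{1..8}. csu21a k (Esu21a 5) = (if 5 = k then 1 else 0)"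
  unfolding nat8 by (simp add: csu21a_def Esu21a_5)
lemma cE_su21a_6: "\<forall>k\<in>{1..8}. csu21a k (Esu21a 6) = (if 6 = k then 1 else 0)"
  unfolding nat8 by (simp add: csu21a_def Esu21a_6)
lemma cE_su21a_7: "\<forall>k\<in>{1..8}. csu21a k (Esu21a 7) = (if 7 = k then 1 else 0)"
  unfolding nat8 by (simp add: csu21a_def Esu21a_7)
lemma cE_su21a_8: "\<forall>k\<in>{1..8}. csu21a k (Esu21a 8) = (if 8 = k then 1 else 0)"
  unfolding nat8 by (simp add: csu21a_def Esu21a_8)
lemma cE_su21a: "\<forall>i\<in>{1..8}. \<forall>k\<in>{1..8}. csu21a k (Esu21a i) = (if i = k then 1 else 0)"
  unfolding nat8 using cE_su21a_1 cE_su21a_2 cE_su21a_3 cE_su21a_4 cE_su21a_5 cE_su21a_6 cE_su21a_7 cE_su21a_8 by simp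

lemma ok_su21a_1_1: "okc csu21a Esu21a commutator C_L72 1 1"
  unfolding okc_def nat8 by (simp add: csu21a_def Esu21a_1  comm_entry antisym_sc_def C_L72_def sc_table_def)
lemma ok_su21a_1_2: "okc csu21a Esu21a commutator C_L72 1 2"
  unfolding okc_def nat8 by (simp add: csu21a_def Esu21a_1 Esu21a_2 comm_entry antisym_sc_def C_L72_def sc_table_def)
lemma ok_su21a_1_3: "okc csu21a Esu21a commutator C_L72 1 3"
  unfolding okc_def nat8 by (simp add: csu21a_def Esu21a_1 Esu21a_3 comm_entry antisym_sc_def C_L72_def sc_table_def)
lemma ok_su21a_1_4: "okc csu21a Esu21a commutator C_L72 1 4"
  unfolding okc_def nat8 by (simp add: csu21a_def Esu21a_1 Esu21a_4 comm_entry antisym_sc_def C_L72_def sc_table_def)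
lemma ok_su21a_1_5: "okc csu21a Esu21a commutator C_L72 1 5"
  unfolding okc_def nat8 by (simp add: csu21a_def Esu21a_1 Esu21a_5 comm_entry antisym_sc_def C_L72_def sc_table_def)
lemma ok_su21a_1_6: "okc csu21a Esu21a commutator C_L72 1 6"
  unfolding okc_def nat8 by (simp add: csu21a_def Esu21a_1 Esu21a_6 comm_entry antisym_sc_def C_L72_def sc_table_def)
lemma ok_su21a_1_7: "okc csu21a Esu21a commutator C_L72 1 7"
  unfolding okc_def nat8 by (simp add: csu21a_def Esu21a_1 Esu21a_7 comm_entry antisym_sc_def C_L72_def sc_table_def)
lemma ok_su21a_1_8: "okc csu21a Esu21a commutator C_L72 1 8"
  unfolding okc_def nat8 by (simp add: csu21a_def Esu21a_1 Esu21a_8 comm_entry antisym_sc_def C_L72_def sc_table_def)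
lemma ok_su21a_2_1: "okc csu21a Esu21a commutator C_L72 2 1"
  unfolding okc_def nat8 by (simp add: csu21a_def Esu21a_2 Esu21a_1 comm_entry antisym_sc_def C_L72_def sc_table_def)
lemma ok_su21a_2_2: "okc csu21a Esu21a commutator C_L72 2 2"
  unfolding okc_def nat8 by (simp add: csu21a_def Esu21a_2  comm_entry antisym_sc_def C_L72_def sc_table_def)
lemma ok_su21a_2_3: "okc csu21a Esu21a commutator C_L72 2 3"
  unfolding okc_def nat8 by (simp add: csu21a_def Esu21a_2 Esu21a_3 comm_entry antisym_sc_def C_L72_def sc_table_def)
lemma ok_su21a_2_4: "okc csu21a Esu21a commutator C_L72 2 4"
  unfolding okc_def nat8 by (simp add: csu21a_def Esu21a_2 Esu21a_4 comm_entry antisym_sc_def C_L72_def sc_table_def)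
lemma ok_su21a_2_5: "okc csu21a Esu21a commutator C_L72 2 5"
  unfolding okc_def nat8 by (simp add: csu21a_def Esu21a_2 Esu21a_5 comm_entry antisym_sc_def C_L72_def sc_table_def)
lemma ok_su21a_2_6: "okc csu21a Esu21a commutator C_L72 2 6"
  unfolding okc_def nat8 by (simp add: csu21a_def Esu21a_2 Esu21a_6 comm_entry antisym_sc_def C_L72_def sc_table_def)
lemma ok_su21a_2_7: "okc csu21a Esu21a commutator C_L72 2 7"
  unfolding okc_def nat8 by (simp add: csu21a_def Esu21a_2 Esu21a_7 comm_entry antisym_sc_def C_L72_def sc_table_def)
lemma ok_su21a_2_8: "okc csu21a Esu21a commutator C_L72 2 8"
  unfolding okc_def nat8 by (simp add: csu21a_def Esu21a_2 Esu21a_8 comm_entry antisym_sc_def C_L72_def sc_table_def)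
lemma ok_su21a_3_1: "okc csu21a Esu21a commutator C_L72 3 1"
  unfolding okc_def nat8 by (simp add: csu21a_def Esu21a_3 Esu21a_1 comm_entry antisym_sc_def C_L72_def sc_table_def)
lemma ok_su21a_3_2: "okc csu21a Esu21a commutator C_L72 3 2"
  unfolding okc_def nat8 by (simp add: csu21a_def Esu21a_3 Esu21a_2 comm_entry antisym_sc_def C_L72_def sc_table_def)
lemma ok_su21a_3_3: "okc csu21a Esu21a commutator C_L72 3 3"
  unfolding okc_def nat8 by (simp add: csu21a_def Esu21a_3  comm_entry antisym_sc_def C_L72_def sc_table_def)
lemma ok_su21a_3_4: "okc csu21a Esu21a commutator C_L72 3 4"
  unfolding okc_def nat8 by (simp add: csu21a_def Esu21a_3 Esu21a_4 comm_entry antisym_sc_def C_L72_def sc_table_def)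
lemma ok_su21a_3_5: "okc csu21a Esu21a commutator C_L72 3 5"
  unfolding okc_def nat8 by (simp add: csu21a_def Esu21a_3 Esu21a_5 comm_entry antisym_sc_def C_L72_def sc_table_def)
lemma ok_su21a_3_6: "okc csu21a Esu21a commutator C_L72 3 6"
  unfolding okc_def nat8 by (simp add: csu21a_def Esu21a_3 Esu21a_6 comm_entry antisym_sc_def C_L72_def sc_table_def)
lemma ok_su21a_3_7: "okc csu21a Esu21a commutator C_L72 3 7"
  unfolding okc_def nat8 by (simp add: csu21a_def Esu21a_3 Esu21a_7 comm_entry antisym_sc_def C_L72_def sc_table_def)
lemma ok_su21a_3_8: "okc csu21a Esu21a commutator C_L72 3 8"
  unfolding okc_def nat8 by (simp add: csu21a_def Esu21a_3 Esu21a_8 comm_entry antisym_sc_def C_L72_def sc_table_def)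
lemma ok_su21a_4_1: "okc csu21a Esu21a commutator C_L72 4 1"
  unfolding okc_def nat8 by (simp add: csu21a_def Esu21a_4 Esu21a_1 comm_entry antisym_sc_def C_L72_def sc_table_def)
lemma ok_su21a_4_2: "okc csu21a Esu21a commutator C_L72 4 2"
  unfolding okc_def nat8 by (simp add: csu21a_def Esu21a_4 Esu21a_2 comm_entry antisym_sc_def C_L72_def sc_table_def)
lemma ok_su21a_4_3: "okc csu21a Esu21a commutator C_L72 4 3"
  unfolding okc_def nat8 by (simp add: csu21a_def Esu21a_4 Esu21a_3 comm_entry antisym_sc_def C_L72_def sc_table_def)
lemma ok_su21a_4_4: "okc csu21a Esu21a commutator C_L72 4 4"
  unfolding okc_def nat8 by (simp add: csu21a_def Esu21a_4  comm_entry antisym_sc_def C_L72_def sc_table_def)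
lemma ok_su21a_4_5: "okc csu21a Esu21a commutator C_L72 4 5"
  unfolding okc_def nat8 by (simp add: csu21a_def Esu21a_4 Esu21a_5 comm_entry antisym_sc_def C_L72_def sc_table_def)
lemma ok_su21a_4_6: "okc csu21a Esu21a commutator C_L72 4 6"
  unfolding okc_def nat8 by (simp add: csu21a_def Esu21a_4 Esu21a_6 comm_entry antisym_sc_def C_L72_def sc_table_def)
lemma ok_su21a_4_7: "okc csu21a Esu21a commutator C_L72 4 7"
  unfolding okc_def nat8 by (simp add: csu21a_def Esu21a_4 Esu21a_7 comm_entry antisym_sc_def C_L72_def sc_table_def)
lemma ok_su21a_4_8: "okc csu21a Esu21a commutator C_L72 4 8"
  unfolding okc_def nat8 by (simp add: csu21a_def Esu21a_4 Esu21a_8 comm_entry antisym_sc_def C_L72_def sc_table_def)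
lemma ok_su21a_5_1: "okc csu21a Esu21a commutator C_L72 5 1"
  unfolding okc_def nat8 by (simp add: csu21a_def Esu21a_5 Esu21a_1 comm_entry antisym_sc_def C_L72_def sc_table_def)
lemma ok_su21a_5_2: "okc csu21a Esu21a commutator C_L72 5 2"
  unfolding okc_def nat8 by (simp add: csu21a_def Esu21a_5 Esu21a_2 comm_entry antisym_sc_def C_L72_def sc_table_def)
lemma ok_su21a_5_3: "okc csu21a Esu21a commutator C_L72 5 3"
  unfolding okc_def nat8 by (simp add: csu21a_def Esu21a_5 Esu21a_3 comm_entry antisym_sc_def C_L72_def sc_table_def)
lemma ok_su21a_5_4: "okc csu21a Esu21a commutator C_L72 5 4"
  unfolding okc_def nat8 by (simp add: csu21a_def Esu21a_5 Esu21a_4 comm_entry antisym_sc_def C_L72_def sc_table_def)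
lemma ok_su21a_5_5: "okc csu21a Esu21a commutator C_L72 5 5"
  unfolding okc_def nat8 by (simp add: csu21a_def Esu21a_5  comm_entry antisym_sc_def C_L72_def sc_table_def)
lemma ok_su21a_5_6: "okc csu21a Esu21a commutator C_L72 5 6"
  unfolding okc_def nat8 by (simp add: csu21a_def Esu21a_5 Esu21a_6 comm_entry antisym_sc_def C_L72_def sc_table_def)
lemma ok_su21a_5_7: "okc csu21a Esu21a commutator C_L72 5 7"
  unfolding okc_def nat8 by (simp add: csu21a_def Esu21a_5 Esu21a_7 comm_entry antisym_sc_def C_L72_def sc_table_def)
lemma ok_su21a_5_8: "okc csu21a Esu21a commutator C_L72 5 8"
  unfolding okc_def nat8 by (simp add: csu21a_def Esu21a_5 Esu21a_8 comm_entry antisym_sc_def C_L72_def sc_table_def)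
lemma ok_su21a_6_1: "okc csu21a Esu21a commutator C_L72 6 1"
  unfolding okc_def nat8 by (simp add: csu21a_def Esu21a_6 Esu21a_1 comm_entry antisym_sc_def C_L72_def sc_table_def)
lemma ok_su21a_6_2: "okc csu21a Esu21a commutator C_L72 6 2"
  unfolding okc_def nat8 by (simp add: csu21a_def Esu21a_6 Esu21a_2 comm_entry antisym_sc_def C_L72_def sc_table_def)
lemma ok_su21a_6_3: "okc csu21a Esu21a commutator C_L72 6 3"
  unfolding okc_def nat8 by (simp add: csu21a_def Esu21a_6 Esu21a_3 comm_entry antisym_sc_def C_L72_def sc_table_def)
lemma ok_su21a_6_4: "okc csu21a Esu21a commutator C_L72 6 4"
  unfolding okc_def nat8 by (simp add: csu21a_def Esu21a_6 Esu21a_4 comm_entry antisym_sc_def C_L72_def sc_table_def)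
lemma ok_su21a_6_5: "okc csu21a Esu21a commutator C_L72 6 5"
  unfolding okc_def nat8 by (simp add: csu21a_def Esu21a_6 Esu21a_5 comm_entry antisym_sc_def C_L72_def sc_table_def)
lemma ok_su21a_6_6: "okc csu21a Esu21a commutator C_L72 6 6"
  unfolding okc_def nat8 by (simp add: csu21a_def Esu21a_6  comm_entry antisym_sc_def C_L72_def sc_table_def)
lemma ok_su21a_6_7: "okc csu21a Esu21a commutator C_L72 6 7"
  unfolding okc_def nat8 by (simp add: csu21a_def Esu21a_6 Esu21a_7 comm_entry antisym_sc_def C_L72_def sc_table_def)
lemma ok_su21a_6_8: "okc csu21a Esu21a commutator C_L72 6 8"
  unfolding okc_def nat8 by (simp add: csu21a_def Esu21a_6 Esu21a_8 comm_entry antisym_sc_def C_L72_def sc_table_def)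
lemma ok_su21a_7_1: "okc csu21a Esu21a commutator C_L72 7 1"
  unfolding okc_def nat8 by (simp add: csu21a_def Esu21a_7 Esu21a_1 comm_entry antisym_sc_def C_L72_def sc_table_def)
lemma ok_su21a_7_2: "okc csu21a Esu21a commutator C_L72 7 2"
  unfolding okc_def nat8 by (simp add: csu21a_def Esu21a_7 Esu21a_2 comm_entry antisym_sc_def C_L72_def sc_table_def)
lemma ok_su21a_7_3: "okc csu21a Esu21a commutator C_L72 7 3"
  unfolding okc_def nat8 by (simp add: csu21a_def Esu21a_7 Esu21a_3 comm_entry antisym_sc_def C_L72_def sc_table_def)
lemma ok_su21a_7_4: "okc csu21a Esu21a commutator C_L72 7 4"
  unfolding okc_def nat8 by (simp add: csu21a_def Esu21a_7 Esu21a_4 comm_entry antisym_sc_def C_L72_def sc_table_def)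
lemma ok_su21a_7_5: "okc csu21a Esu21a commutator C_L72 7 5"
  unfolding okc_def nat8 by (simp add: csu21a_def Esu21a_7 Esu21a_5 comm_entry antisym_sc_def C_L72_def sc_table_def)
lemma ok_su21a_7_6: "okc csu21a Esu21a commutator C_L72 7 6"
  unfolding okc_def nat8 by (simp add: csu21a_def Esu21a_7 Esu21a_6 comm_entry antisym_sc_def C_L72_def sc_table_def)
lemma ok_su21a_7_7: "okc csu21a Esu21a commutator C_L72 7 7"
  unfolding okc_def nat8 by (simp add: csu21a_def Esu21a_7  comm_entry antisym_sc_def C_L72_def sc_table_def)
lemma ok_su21a_7_8: "okc csu21a Esu21a commutator C_L72 7 8"
  unfolding okc_def nat8 by (simp add: csu21a_def Esu21a_7 Esu21a_8 comm_entry antisym_sc_def C_L72_def sc_table_def)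
lemma ok_su21a_8_1: "okc csu21a Esu21a commutator C_L72 8 1"
  unfolding okc_def nat8 by (simp add: csu21a_def Esu21a_8 Esu21a_1 comm_entry antisym_sc_def C_L72_def sc_table_def)
lemma ok_su21a_8_2: "okc csu21a Esu21a commutator C_L72 8 2"
  unfolding okc_def nat8 by (simp add: csu21a_def Esu21a_8 Esu21a_2 comm_entry antisym_sc_def C_L72_def sc_table_def)
lemma ok_su21a_8_3: "okc csu21a Esu21a commutator C_L72 8 3"
  unfolding okc_def nat8 by (simp add: csu21a_def Esu21a_8 Esu21a_3 comm_entry antisym_sc_def C_L72_def sc_table_def)
lemma ok_su21a_8_4: "okc csu21a Esu21a commutator C_L72 8 4"
  unfolding okc_def nat8 by (simp add: csu21a_def Esu21a_8 Esu21a_4 comm_entry antisym_sc_def C_L72_def sc_table_def)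
lemma ok_su21a_8_5: "okc csu21a Esu21a commutator C_L72 8 5"
  unfolding okc_def nat8 by (simp add: csu21a_def Esu21a_8 Esu21a_5 comm_entry antisym_sc_def C_L72_def sc_table_def)
lemma ok_su21a_8_6: "okc csu21a Esu21a commutator C_L72 8 6"
  unfolding okc_def nat8 by (simp add: csu21a_def Esu21a_8 Esu21a_6 comm_entry antisym_sc_def C_L72_def sc_table_def)
lemma ok_su21a_8_7: "okc csu21a Esu21a commutator C_L72 8 7"
  unfolding okc_def nat8 by (simp add: csu21a_def Esu21a_8 Esu21a_7 comm_entry antisym_sc_def C_L72_def sc_table_def)
lemma ok_su21a_8_8: "okc csu21a Esu21a commutator C_L72 8 8"
  unfolding okc_def nat8 by (simp add: csu21a_def Esu21a_8  comm_entry antisym_sc_def C_L72_def sc_table_def)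
lemma ok_su21a: "\<forall>i\<in>{1..8}. \<forall>j\<in>{1..8}. okc csu21a Esu21a commutator C_L72 i j"
  unfolding nat8 using ok_su21a_1_1 ok_su21a_1_2 ok_su21a_1_3 ok_su21a_1_4 ok_su21a_1_5 ok_su21a_1_6 ok_su21a_1_7 ok_su21a_1_8 ok_su21a_2_1 ok_su21a_2_2 ok_su21a_2_3 ok_su21a_2_4 ok_su21a_2_5 ok_su21a_2_6 ok_su21a_2_7 ok_su21a_2_8 ok_su21a_3_1 ok_su21a_3_2 ok_su21a_3_3 ok_su21a_3_4 ok_su21a_3_5 ok_su21a_3_6 ok_su21a_3_7 ok_su21a_3_8 ok_su21a_4_1 ok_su21a_4_2 ok_su21a_4_3 ok_su21a_4_4 ok_su21a_4_5 ok_su21a_4_6 ok_su21a_4_7 ok_su21a_4_8 ok_su21a_5_1 ok_su21a_5_2 ok_su21a_5_3 ok_su21a_5_4 ok_su21a_5_5 ok_su21a_5_6 ok_su21a_5_7 ok_su21a_5_8 ok_su21a_6_1 ok_su21a_6_2 ok_su21a_6_3 ok_su21a_6_4 ok_su21a_6_5 ok_su21a_6_6 ok_su21a_6_7 ok_su21a_6_8 ok_su21a_7_1 ok_su21a_7_2 ok_su21a_7_3 ok_su21a_7_4 ok_su21a_7_5 ok_su21a_7_6 ok_su21a_7_7 ok_su21a_7_8 ok_su21a_8_1 ok_su21a_8_2 ok_su21a_8_3 ok_su21a_8_4 ok_su21a_8_5 ok_su21a_8_6 ok_su21a_8_7 ok_su21a_8_8 by simp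


lemma gsum_su21a: "(\<Sum>i\<in>{1..8}. x i *\<^sub>R Esu21a i) = m3 (Complex 0 ((-(1/2)) * x 3 + 1 * x 8)) (Complex ((-(1/2)) * x 2) ((-(1/2)) * x 1)) (Complex ((-1) * x 4) (1 * x 6)) (Complex ((1/2) * x 2) ((-(1/2)) * x 1)) (Complex 0 ((1/2) * x 3 + 1 * x 8)) (Complex ((-1) * x 5) (1 * x 7)) (Complex ((-1) * x 4) ((-1) * x 6)) (Complex ((-1) * x 5) ((-1) * x 7)) (Complex 0 ((-2) * x 8))"
  unfolding nat8 by (simp add: Esu21a_1 Esu21a_2 Esu21a_3 Esu21a_4 Esu21a_5 Esu21a_6 Esu21a_7 Esu21a_8 vec_eq_iff forall_3 complex_eq_iff algebra_simps)

lemma gf_su21a: "A \<in> su21 \<Longrightarrow> (\<Sum>i\<in>{1..8}. csu21a i A *\<^sub>R Esu21a i) = A"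
proof -
  assume A: "A \<in> su21"
  have H: "\<forall>r s. (adjoint3 A ** J21 + J21 ** A) $ r $ s = 0"
    using A unfolding su21_def by simp
  have H': "Re (A$1$1) = 0 \<and> Re (A$2$2) = 0 \<and> Re (A$3$3) = 0 \<and> Re (A$2$1) = - Re (A$1$2) \<and> Im (A$2$1) = Im (A$1$2)
    \<and> Re (A$3$1) = Re (A$1$3) \<and> Im (A$3$1) = - Im (A$1$3) \<and> Re (A$3$2) = Re (A$2$3) \<and> Im (A$3$2) = - Im (A$2$3)"
    using H[rule_format, of 1 1] H[rule_format, of 2 2] H[rule_format, of 3 3] H[rule_format, of 2 1]
      H[rule_format, of 3 1] H[rule_format, of 3 2]
    by (simp add: mm_entry adjoint3_def J21_def complex_eq_iff)
  have T: "A$1$1 + A$2$2 + A$3$3 = 0" using A by (simp add: su21_def mtrace_def sum_3)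
  have T': "Im (A$3$3) = - Im (A$1$1) - Im (A$2$2)" using T by (simp add: complex_eq_iff)
  show ?thesis
    unfolding gsum_su21a using H' T'
    by (simp add: csu21a_def vec_eq_iff forall_3 complex_eq_iff field_simps)
qed

lemma gV_su21a: "gmap Esu21a x \<in> su21"
  unfolding gmap_def gsum_su21a
  by (simp add: su21_def mtrace_def sum_3 adjoint3_def mm_entry J21_def vec_eq_iff forall_3 complex_eq_iff)

lemma contr_su21a: "is_contraction_of UNIV L72_L1 su21 commutator"
  unfolding L72_L1_def
  by (rule abstract2[where c=csu21a and E=Esu21a, OF lin_su21a gf_su21a gV_su21a cE_su21a bilinear_comm su21_comm ok_su21a])


definition Esu21b :: "nat \<Rightarrow> complex^3^3" where
  "Esu21b i = (if i = 1 then m3 0 0 0 0 0 1 0 1 0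
    else if i = 2 then m3 0 0 0 0 (Complex 0 1) (Complex 0 (-1)) 0 (Complex 0 1) (Complex 0 (-1))
    else if i = 3 then m3 0 0 0 0 (Complex 0 (-(1/4))) (Complex 0 (-(1/4))) 0 (Complex 0 (1/4)) (Complex 0 (1/4))
    else if i = 4 then m3 0 (Complex 0 (-1)) (Complex 0 1) (Complex 0 (-1)) 0 0 (Complex 0 (-1)) 0 0
    else if i = 5 then m3 0 (1/2) (1/2) (-(1/2)) 0 0 (1/2) 0 0
    else if i = 6 then m3 0 2 (-2) (-2) 0 0 (-2) 0 0
    else if i = 7 then m3 0 (Complex 0 1) (Complex 0 1) (Complex 0 1) 0 0 (Complex 0 (-1)) 0 0
    else m3 (Complex 0 (-2)) 0 0 0 (Complex 0 1) 0 0 0 (Complex 0 1))"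

lemma Esu21b_1: "Esu21b (Suc 0) = m3 0 0 0 0 0 1 0 1 0" by (simp add: Esu21b_def)
lemma Esu21b_2: "Esu21b 2 = m3 0 0 0 0 (Complex 0 1) (Complex 0 (-1)) 0 (Complex 0 1) (Complex 0 (-1))" by (simp add: Esu21b_def)
lemma Esu21b_3: "Esu21b 3 = m3 0 0 0 0 (Complex 0 (-(1/4))) (Complex 0 (-(1/4))) 0 (Complex 0 (1/4)) (Complex 0 (1/4))" by (simp add: Esu21b_def)
lemma Esu21b_4: "Esu21b 4 = m3 0 (Complex 0 (-1)) (Complex 0 1) (Complex 0 (-1)) 0 0 (Complex 0 (-1)) 0 0" by (simp add: Esu21b_def)
lemma Esu21b_5: "Esu21b 5 = m3 0 (1/2) (1/2) (-(1/2)) 0 0 (1/2) 0 0" by (simp add: Esu21b_def)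
lemma Esu21b_6: "Esu21b 6 = m3 0 2 (-2) (-2) 0 0 (-2) 0 0" by (simp add: Esu21b_def)
lemma Esu21b_7: "Esu21b 7 = m3 0 (Complex 0 1) (Complex 0 1) (Complex 0 1) 0 0 (Complex 0 (-1)) 0 0" by (simp add: Esu21b_def)
lemma Esu21b_8: "Esu21b 8 = m3 (Complex 0 (-2)) 0 0 0 (Complex 0 1) 0 0 0 (Complex 0 1)" by (simp add: Esu21b_def)
definition csu21b :: "nat \<Rightarrow> complex^3^3 \<Rightarrow> real" where
  "csu21b k A = (if k = 1 then Re (A$2$3)
    else if k = 2 then (Im (A$2$2) - (- Im (A$1$1) / 2) - Im (A$2$3)) / 2
    else if k = 3 then -2 * (Im (A$2$3) + Im (A$2$2) - (- Im (A$1$1) / 2))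
    else if k = 4 then (Im (A$1$3) - Im (A$1$2)) / 2
    else if k = 5 then Re (A$1$2) + Re (A$1$3)
    else if k = 6 then (Re (A$1$2) - Re (A$1$3)) / 4
    else if k = 7 then (Im (A$1$2) + Im (A$1$3)) / 2
    else (- Im (A$1$1) / 2))"

lemma lin_su21b: "k \<in> {1..8} \<Longrightarrow> linear (csu21b k)"
  unfolding nat8 by (auto intro!: linearI simp: csu21b_def field_simps)

lemma cE_su21b_1: "\<forall>k\<in>{1..8}. csu21b k (Esu21b 1) = (if 1 = k then 1 else 0)"
  unfolding nat8 by (simp add: csu21b_def Esu21b_1)
lemma cE_su21b_2: "\<forall>k\<in>{1..8}. csu21b k (Esu21b 2) = (if 2 = k then 1 else 0)"
  unfolding nat8 by (simp add: csu21b_def Esu21b_2)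
lemma cE_su21b_3: "\<forall>k\<in>{1..8}. csu21b k (Esu21b 3) = (if 3 = k then 1 else 0)"
  unfolding nat8 by (simp add: csu21b_def Esu21b_3)
lemma cE_su21b_4: "\<forall>k\<in>{1..8}. csu21b k (Esu21b 4) = (if 4 = k then 1 else 0)"
  unfolding nat8 by (simp add: csu21b_def Esu21b_4)
lemma cE_su21b_5: "\<forall>k\<in>{1..8}. csu21b k (Esu21b 5) = (if 5 = k then 1 else 0)"
  unfolding nat8 by (simp add: csu21b_def Esu21b_5)
lemma cE_su21b_6: "\<forall>k\<in>{1..8}. csu21b k (Esu21b 6) = (if 6 = k then 1 else 0)"
  unfolding nat8 by (simp add: csu21b_def Esu21b_6)
lemma cE_su21b_7: "\<forall>k\<in>{1..8}. csu21b k (Esu21b 7) = (if 7 = k then 1 else 0)"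
  unfolding nat8 by (simp add: csu21b_def Esu21b_7)
lemma cE_su21b_8: "\<forall>k\<in>{1..8}. csu21b k (Esu21b 8) = (if 8 = k then 1 else 0)"
  unfolding nat8 by (simp add: csu21b_def Esu21b_8)
lemma cE_su21b: "\<forall>i\<in>{1..8}. \<forall>k\<in>{1..8}. csu21b k (Esu21b i) = (if i = k then 1 else 0)"
  unfolding nat8 using cE_su21b_1 cE_su21b_2 cE_su21b_3 cE_su21b_4 cE_su21b_5 cE_su21b_6 cE_su21b_7 cE_su21b_8 by simp

lemma ok_su21b_1_1: "okc csu21b Esu21b commutator C_L77 1 1"
  unfolding okc_def nat8 by (simp add: csu21b_def Esu21b_1  comm_entry antisym_sc_def C_L77_def sc_table_def)
lemma ok_su21b_1_2: "okc csu21b Esu21b commutator C_L77 1 2"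
  unfolding okc_def nat8 by (simp add: csu21b_def Esu21b_1 Esu21b_2 comm_entry antisym_sc_def C_L77_def sc_table_def)
lemma ok_su21b_1_3: "okc csu21b Esu21b commutator C_L77 1 3"
  unfolding okc_def nat8 by (simp add: csu21b_def Esu21b_1 Esu21b_3 comm_entry antisym_sc_def C_L77_def sc_table_def)
lemma ok_su21b_1_4: "okc csu21b Esu21b commutator C_L77 1 4"
  unfolding okc_def nat8 by (simp add: csu21b_def Esu21b_1 Esu21b_4 comm_entry antisym_sc_def C_L77_def sc_table_def)
lemma ok_su21b_1_5: "okc csu21b Esu21b commutator C_L77 1 5"
  unfolding okc_def nat8 by (simp add: csu21b_def Esu21b_1 Esu21b_5 comm_entry antisym_sc_def C_L77_def sc_table_def)
lemma ok_su21b_1_6: "okc csu21b Esu21b commutator C_L77 1 6"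
  unfolding okc_def nat8 by (simp add: csu21b_def Esu21b_1 Esu21b_6 comm_entry antisym_sc_def C_L77_def sc_table_def)
lemma ok_su21b_1_7: "okc csu21b Esu21b commutator C_L77 1 7"
  unfolding okc_def nat8 by (simp add: csu21b_def Esu21b_1 Esu21b_7 comm_entry antisym_sc_def C_L77_def sc_table_def)
lemma ok_su21b_1_8: "okc csu21b Esu21b commutator C_L77 1 8"
  unfolding okc_def nat8 by (simp add: csu21b_def Esu21b_1 Esu21b_8 comm_entry antisym_sc_def C_L77_def sc_table_def)
lemma ok_su21b_2_1: "okc csu21b Esu21b commutator C_L77 2 1"
  unfolding okc_def nat8 by (simp add: csu21b_def Esu21b_2 Esu21b_1 comm_entry antisym_sc_def C_L77_def sc_table_def)
lemma ok_su21b_2_2: "okc csu21b Esu21b commutator C_L77 2 2"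
  unfolding okc_def nat8 by (simp add: csu21b_def Esu21b_2  comm_entry antisym_sc_def C_L77_def sc_table_def)
lemma ok_su21b_2_3: "okc csu21b Esu21b commutator C_L77 2 3"
  unfolding okc_def nat8 by (simp add: csu21b_def Esu21b_2 Esu21b_3 comm_entry antisym_sc_def C_L77_def sc_table_def)
lemma ok_su21b_2_4: "okc csu21b Esu21b commutator C_L77 2 4"
  unfolding okc_def nat8 by (simp add: csu21b_def Esu21b_2 Esu21b_4 comm_entry antisym_sc_def C_L77_def sc_table_def)
lemma ok_su21b_2_5: "okc csu21b Esu21b commutator C_L77 2 5"
  unfolding okc_def nat8 by (simp add: csu21b_def Esu21b_2 Esu21b_5 comm_entry antisym_sc_def C_L77_def sc_table_def)
lemma ok_su21b_2_6: "okc csu21b Esu21b commutator C_L77 2 6"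
  unfolding okc_def nat8 by (simp add: csu21b_def Esu21b_2 Esu21b_6 comm_entry antisym_sc_def C_L77_def sc_table_def)
lemma ok_su21b_2_7: "okc csu21b Esu21b commutator C_L77 2 7"
  unfolding okc_def nat8 by (simp add: csu21b_def Esu21b_2 Esu21b_7 comm_entry antisym_sc_def C_L77_def sc_table_def)
lemma ok_su21b_2_8: "okc csu21b Esu21b commutator C_L77 2 8"
  unfolding okc_def nat8 by (simp add: csu21b_def Esu21b_2 Esu21b_8 comm_entry antisym_sc_def C_L77_def sc_table_def)
lemma ok_su21b_3_1: "okc csu21b Esu21b commutator C_L77 3 1"
  unfolding okc_def nat8 by (simp add: csu21b_def Esu21b_3 Esu21b_1 comm_entry antisym_sc_def C_L77_def sc_table_def)
lemma ok_su21b_3_2: "okc csu21b Esu21b commutator C_L77 3 2"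
  unfolding okc_def nat8 by (simp add: csu21b_def Esu21b_3 Esu21b_2 comm_entry antisym_sc_def C_L77_def sc_table_def)
lemma ok_su21b_3_3: "okc csu21b Esu21b commutator C_L77 3 3"
  unfolding okc_def nat8 by (simp add: csu21b_def Esu21b_3  comm_entry antisym_sc_def C_L77_def sc_table_def)
lemma ok_su21b_3_4: "okc csu21b Esu21b commutator C_L77 3 4"
  unfolding okc_def nat8 by (simp add: csu21b_def Esu21b_3 Esu21b_4 comm_entry antisym_sc_def C_L77_def sc_table_def)
lemma ok_su21b_3_5: "okc csu21b Esu21b commutator C_L77 3 5"
  unfolding okc_def nat8 by (simp add: csu21b_def Esu21b_3 Esu21b_5 comm_entry antisym_sc_def C_L77_def sc_table_def)
lemma ok_su21b_3_6: "okc csu21b Esu21b commutator C_L77 3 6"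
  unfolding okc_def nat8 by (simp add: csu21b_def Esu21b_3 Esu21b_6 comm_entry antisym_sc_def C_L77_def sc_table_def)
lemma ok_su21b_3_7: "okc csu21b Esu21b commutator C_L77 3 7"
  unfolding okc_def nat8 by (simp add: csu21b_def Esu21b_3 Esu21b_7 comm_entry antisym_sc_def C_L77_def sc_table_def)
lemma ok_su21b_3_8: "okc csu21b Esu21b commutator C_L77 3 8"
  unfolding okc_def nat8 by (simp add: csu21b_def Esu21b_3 Esu21b_8 comm_entry antisym_sc_def C_L77_def sc_table_def)
lemma ok_su21b_4_1: "okc csu21b Esu21b commutator C_L77 4 1"
  unfolding okc_def nat8 by (simp add: csu21b_def Esu21b_4 Esu21b_1 comm_entry antisym_sc_def C_L77_def sc_table_def)
lemma ok_su21b_4_2: "okc csu21b Esu21b commutator C_L77 4 2"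
  unfolding okc_def nat8 by (simp add: csu21b_def Esu21b_4 Esu21b_2 comm_entry antisym_sc_def C_L77_def sc_table_def)
lemma ok_su21b_4_3: "okc csu21b Esu21b commutator C_L77 4 3"
  unfolding okc_def nat8 by (simp add: csu21b_def Esu21b_4 Esu21b_3 comm_entry antisym_sc_def C_L77_def sc_table_def)
lemma ok_su21b_4_4: "okc csu21b Esu21b commutator C_L77 4 4"
  unfolding okc_def nat8 by (simp add: csu21b_def Esu21b_4  comm_entry antisym_sc_def C_L77_def sc_table_def)
lemma ok_su21b_4_5: "okc csu21b Esu21b commutator C_L77 4 5"
  unfolding okc_def nat8 by (simp add: csu21b_def Esu21b_4 Esu21b_5 comm_entry antisym_sc_def C_L77_def sc_table_def)
lemma ok_su21b_4_6: "okc csu21b Esu21b commutator C_L77 4 6"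
  unfolding okc_def nat8 by (simp add: csu21b_def Esu21b_4 Esu21b_6 comm_entry antisym_sc_def C_L77_def sc_table_def)
lemma ok_su21b_4_7: "okc csu21b Esu21b commutator C_L77 4 7"
  unfolding okc_def nat8 by (simp add: csu21b_def Esu21b_4 Esu21b_7 comm_entry antisym_sc_def C_L77_def sc_table_def)
lemma ok_su21b_4_8: "okc csu21b Esu21b commutator C_L77 4 8"
  unfolding okc_def nat8 by (simp add: csu21b_def Esu21b_4 Esu21b_8 comm_entry antisym_sc_def C_L77_def sc_table_def)
lemma ok_su21b_5_1: "okc csu21b Esu21b commutator C_L77 5 1"
  unfolding okc_def nat8 by (simp add: csu21b_def Esu21b_5 Esu21b_1 comm_entry antisym_sc_def C_L77_def sc_table_def)
lemma ok_su21b_5_2: "okc csu21b Esu21b commutator C_L77 5 2"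
  unfolding okc_def nat8 by (simp add: csu21b_def Esu21b_5 Esu21b_2 comm_entry antisym_sc_def C_L77_def sc_table_def)
lemma ok_su21b_5_3: "okc csu21b Esu21b commutator C_L77 5 3"
  unfolding okc_def nat8 by (simp add: csu21b_def Esu21b_5 Esu21b_3 comm_entry antisym_sc_def C_L77_def sc_table_def)
lemma ok_su21b_5_4: "okc csu21b Esu21b commutator C_L77 5 4"
  unfolding okc_def nat8 by (simp add: csu21b_def Esu21b_5 Esu21b_4 comm_entry antisym_sc_def C_L77_def sc_table_def)
lemma ok_su21b_5_5: "okc csu21b Esu21b commutator C_L77 5 5"
  unfolding okc_def nat8 by (simp add: csu21b_def Esu21b_5  comm_entry antisym_sc_def C_L77_def sc_table_def)
lemma ok_su21b_5_6: "okc csu21b Esu21b commutator C_L77 5 6"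
  unfolding okc_def nat8 by (simp add: csu21b_def Esu21b_5 Esu21b_6 comm_entry antisym_sc_def C_L77_def sc_table_def)
lemma ok_su21b_5_7: "okc csu21b Esu21b commutator C_L77 5 7"
  unfolding okc_def nat8 by (simp add: csu21b_def Esu21b_5 Esu21b_7 comm_entry antisym_sc_def C_L77_def sc_table_def)
lemma ok_su21b_5_8: "okc csu21b Esu21b commutator C_L77 5 8"
  unfolding okc_def nat8 by (simp add: csu21b_def Esu21b_5 Esu21b_8 comm_entry antisym_sc_def C_L77_def sc_table_def)
lemma ok_su21b_6_1: "okc csu21b Esu21b commutator C_L77 6 1"
  unfolding okc_def nat8 by (simp add: csu21b_def Esu21b_6 Esu21b_1 comm_entry antisym_sc_def C_L77_def sc_table_def)
lemma ok_su21b_6_2: "okc csu21b Esu21b commutator C_L77 6 2"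
  unfolding okc_def nat8 by (simp add: csu21b_def Esu21b_6 Esu21b_2 comm_entry antisym_sc_def C_L77_def sc_table_def)
lemma ok_su21b_6_3: "okc csu21b Esu21b commutator C_L77 6 3"
  unfolding okc_def nat8 by (simp add: csu21b_def Esu21b_6 Esu21b_3 comm_entry antisym_sc_def C_L77_def sc_table_def)
lemma ok_su21b_6_4: "okc csu21b Esu21b commutator C_L77 6 4"
  unfolding okc_def nat8 by (simp add: csu21b_def Esu21b_6 Esu21b_4 comm_entry antisym_sc_def C_L77_def sc_table_def)
lemma ok_su21b_6_5: "okc csu21b Esu21b commutator C_L77 6 5"
  unfolding okc_def nat8 by (simp add: csu21b_def Esu21b_6 Esu21b_5 comm_entry antisym_sc_def C_L77_def sc_table_def)
lemma ok_su21b_6_6: "okc csu21b Esu21b commutator C_L77 6 6"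
  unfolding okc_def nat8 by (simp add: csu21b_def Esu21b_6  comm_entry antisym_sc_def C_L77_def sc_table_def)
lemma ok_su21b_6_7: "okc csu21b Esu21b commutator C_L77 6 7"
  unfolding okc_def nat8 by (simp add: csu21b_def Esu21b_6 Esu21b_7 comm_entry antisym_sc_def C_L77_def sc_table_def)
lemma ok_su21b_6_8: "okc csu21b Esu21b commutator C_L77 6 8"
  unfolding okc_def nat8 by (simp add: csu21b_def Esu21b_6 Esu21b_8 comm_entry antisym_sc_def C_L77_def sc_table_def)
lemma ok_su21b_7_1: "okc csu21b Esu21b commutator C_L77 7 1"
  unfolding okc_def nat8 by (simp add: csu21b_def Esu21b_7 Esu21b_1 comm_entry antisym_sc_def C_L77_def sc_table_def)
lemma ok_su21b_7_2: "okc csu21b Esu21b commutator C_L77 7 2"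
  unfolding okc_def nat8 by (simp add: csu21b_def Esu21b_7 Esu21b_2 comm_entry antisym_sc_def C_L77_def sc_table_def)
lemma ok_su21b_7_3: "okc csu21b Esu21b commutator C_L77 7 3"
  unfolding okc_def nat8 by (simp add: csu21b_def Esu21b_7 Esu21b_3 comm_entry antisym_sc_def C_L77_def sc_table_def)
lemma ok_su21b_7_4: "okc csu21b Esu21b commutator C_L77 7 4"
  unfolding okc_def nat8 by (simp add: csu21b_def Esu21b_7 Esu21b_4 comm_entry antisym_sc_def C_L77_def sc_table_def)
lemma ok_su21b_7_5: "okc csu21b Esu21b commutator C_L77 7 5"
  unfolding okc_def nat8 by (simp add: csu21b_def Esu21b_7 Esu21b_5 comm_entry antisym_sc_def C_L77_def sc_table_def)
lemma ok_su21b_7_6: "okc csu21b Esu21b commutator C_L77 7 6"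
  unfolding okc_def nat8 by (simp add: csu21b_def Esu21b_7 Esu21b_6 comm_entry antisym_sc_def C_L77_def sc_table_def)
lemma ok_su21b_7_7: "okc csu21b Esu21b commutator C_L77 7 7"
  unfolding okc_def nat8 by (simp add: csu21b_def Esu21b_7  comm_entry antisym_sc_def C_L77_def sc_table_def)
lemma ok_su21b_7_8: "okc csu21b Esu21b commutator C_L77 7 8"
  unfolding okc_def nat8 by (simp add: csu21b_def Esu21b_7 Esu21b_8 comm_entry antisym_sc_def C_L77_def sc_table_def)
lemma ok_su21b_8_1: "okc csu21b Esu21b commutator C_L77 8 1"
  unfolding okc_def nat8 by (simp add: csu21b_def Esu21b_8 Esu21b_1 comm_entry antisym_sc_def C_L77_def sc_table_def)
lemma ok_su21b_8_2: "okc csu21b Esu21b commutator C_L77 8 2"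
  unfolding okc_def nat8 by (simp add: csu21b_def Esu21b_8 Esu21b_2 comm_entry antisym_sc_def C_L77_def sc_table_def)
lemma ok_su21b_8_3: "okc csu21b Esu21b commutator C_L77 8 3"
  unfolding okc_def nat8 by (simp add: csu21b_def Esu21b_8 Esu21b_3 comm_entry antisym_sc_def C_L77_def sc_table_def)
lemma ok_su21b_8_4: "okc csu21b Esu21b commutator C_L77 8 4"
  unfolding okc_def nat8 by (simp add: csu21b_def Esu21b_8 Esu21b_4 comm_entry antisym_sc_def C_L77_def sc_table_def)
lemma ok_su21b_8_5: "okc csu21b Esu21b commutator C_L77 8 5"
  unfolding okc_def nat8 by (simp add: csu21b_def Esu21b_8 Esu21b_5 comm_entry antisym_sc_def C_L77_def sc_table_def)
lemma ok_su21b_8_6: "okc csu21b Esu21b commutator C_L77 8 6"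
  unfolding okc_def nat8 by (simp add: csu21b_def Esu21b_8 Esu21b_6 comm_entry antisym_sc_def C_L77_def sc_table_def)
lemma ok_su21b_8_7: "okc csu21b Esu21b commutator C_L77 8 7"
  unfolding okc_def nat8 by (simp add: csu21b_def Esu21b_8 Esu21b_7 comm_entry antisym_sc_def C_L77_def sc_table_def)
lemma ok_su21b_8_8: "okc csu21b Esu21b commutator C_L77 8 8"
  unfolding okc_def nat8 by (simp add: csu21b_def Esu21b_8  comm_entry antisym_sc_def C_L77_def sc_table_def)
lemma ok_su21b: "\<forall>i\<in>{1..8}. \<forall>j\<in>{1..8}. okc csu21b Esu21b commutator C_L77 i j"
  unfolding nat8 using ok_su21b_1_1 ok_su21b_1_2 ok_su21b_1_3 ok_su21b_1_4 ok_su21b_1_5 ok_su21b_1_6 ok_su21b_1_7 ok_su21b_1_8 ok_su21b_2_1 ok_su21b_2_2 ok_su21b_2_3 ok_su21b_2_4 ok_su21b_2_5 ok_su21b_2_6 ok_su21b_2_7 ok_su21b_2_8 ok_su21b_3_1 ok_su21b_3_2 ok_su21b_3_3 ok_su21b_3_4 ok_su21b_3_5 ok_su21b_3_6 ok_su21b_3_7 ok_su21b_3_8 ok_su21b_4_1 ok_su21b_4_2 ok_su21b_4_3 ok_su21b_4_4 ok_su21b_4_5 ok_su21b_4_6 ok_su21b_4_7 ok_su21b_4_8 ok_su21b_5_1 ok_su21b_5_2 ok_su21b_5_3 ok_su21b_5_4 ok_su21b_5_5 ok_su21b_5_6 ok_su21b_5_7 ok_su21b_5_8 ok_su21b_6_1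 ok_su21b_6_2 ok_su21b_6_3 ok_su21b_6_4 ok_su21b_6_5 ok_su21b_6_6 ok_su21b_6_7 ok_su21b_6_8 ok_su21b_7_1 ok_su21b_7_2 ok_su21b_7_3 ok_su21b_7_4 ok_su21b_7_5 ok_su21b_7_6 ok_su21b_7_7 ok_su21b_7_8 ok_su21b_8_1 ok_su21b_8_2 ok_su21b_8_3 ok_su21b_8_4 ok_su21b_8_5 ok_su21b_8_6 ok_su21b_8_7 ok_su21b_8_8 by simp


lemma gsum_su21b: "(\<Sum>i\<in>{1..8}. x i *\<^sub>R Esu21b i) = m3 (Complex 0 ((-2) * x 8)) (Complex ((1/2) * x 5 + 2 * x 6) ((-1) * x 4 + 1 * x 7)) (Complex ((1/2) * x 5 + (-2) * x 6) (1 * x 4 + 1 * x 7)) (Complex ((-(1/2)) * x 5 + (-2) * x 6) ((-1) * x 4 + 1 * x 7)) (Complex 0 (1 * x 2 + (-(1/4)) * x 3 + 1 * x 8)) (Complex (1 * x 1) ((-1) * x 2 + (-(1/4)) * x 3)) (Complex ((1/2) * x 5 + (-2) * x 6) ((-1) * x 4 + (-1) * x 7)) (Complex (1 * x 1) (1 * x 2 + (1/4) * x 3)) (Complex 0 ((-1) * x 2 + (1/4) * x 3 + 1 * x 8))"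
  unfolding nat8 by (simp add: Esu21b_1 Esu21b_2 Esu21b_3 Esu21b_4 Esu21b_5 Esu21b_6 Esu21b_7 Esu21b_8 vec_eq_iff forall_3 complex_eq_iff algebra_simps)

lemma gf_su21b: "A \<in> su21 \<Longrightarrow> (\<Sum>i\<in>{1..8}. csu21b i A *\<^sub>R Esu21b i) = A"
proof -
  assume A: "A \<in> su21"
  have H: "\<forall>r s. (adjoint3 A ** J21 + J21 ** A) $ r $ s = 0"
    using A unfolding su21_def by simp
  have H': "Re (A$1$1) = 0 \<and> Re (A$2$2) = 0 \<and> Re (A$3$3) = 0 \<and> Re (A$2$1) = - Re (A$1$2) \<and> Im (A$2$1) = Im (A$1$2)
    \<and> Re (A$3$1) = Re (A$1$3) \<and> Im (A$3$1) = - Im (A$1$3) \<and> Re (A$3$2) = Re (A$2$3) \<and> Im (A$3$2) = - Im (A$2$3)"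
    using H[rule_format, of 1 1] H[rule_format, of 2 2] H[rule_format, of 3 3] H[rule_format, of 2 1]
      H[rule_format, of 3 1] H[rule_format, of 3 2]
    by (simp add: mm_entry adjoint3_def J21_def complex_eq_iff)
  have T: "A$1$1 + A$2$2 + A$3$3 = 0" using A by (simp add: su21_def mtrace_def sum_3)
  have T': "Im (A$3$3) = - Im (A$1$1) - Im (A$2$2)" using T by (simp add: complex_eq_iff)
  show ?thesis
    unfolding gsum_su21b using H' T'
    by (simp add: csu21b_def vec_eq_iff forall_3 complex_eq_iff field_simps)
qed

lemma gV_su21b: "gmap Esu21b x \<in> su21"
  unfolding gmap_def gsum_su21b
  by (simp add: su21_def mtrace_def sum_3 adjoint3_def mm_entry J21_def vec_eq_iff forall_3 complex_eq_iff)

lemma contr_su21b: "is_contraction_of UNIV L77_L1 su21 commutator"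
  unfolding L77_L1_def
  by (rule abstract2[where c=csu21b and E=Esu21b, OF lin_su21b gf_su21b gV_su21b cE_su21b bilinear_comm su21_comm ok_su21b])


definition Esl3 :: "nat \<Rightarrow> real^3^3" where
  "Esl3 i = (if i = 1 then m3 1 0 0 0 (-1) 0 0 0 0
    else if i = 2 then m3 0 1 0 0 0 0 0 0 0
    else if i = 3 then m3 0 0 0 1 0 0 0 0 0
    else if i = 4 then m3 0 0 1 0 0 0 0 0 0
    else if i = 5 then m3 0 0 0 0 0 1 0 0 0
    else if i = 6 then m3 0 0 0 0 0 0 0 1 0
    else if i = 7 then m3 0 0 0 0 0 0 (-1) 0 0
    else m3 1 0 0 0 1 0 0 0 (-2))"

lemma Esl3_1: "Esl3 (Suc 0) = m3 1 0 0 0 (-1) 0 0 0 0" by (simp add: Esl3_def)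
lemma Esl3_2: "Esl3 2 = m3 0 1 0 0 0 0 0 0 0" by (simp add: Esl3_def)
lemma Esl3_3: "Esl3 3 = m3 0 0 0 1 0 0 0 0 0" by (simp add: Esl3_def)
lemma Esl3_4: "Esl3 4 = m3 0 0 1 0 0 0 0 0 0" by (simp add: Esl3_def)
lemma Esl3_5: "Esl3 5 = m3 0 0 0 0 0 1 0 0 0" by (simp add: Esl3_def)
lemma Esl3_6: "Esl3 6 = m3 0 0 0 0 0 0 0 1 0" by (simp add: Esl3_def)
lemma Esl3_7: "Esl3 7 = m3 0 0 0 0 0 0 (-1) 0 0" by (simp add: Esl3_def)
lemma Esl3_8: "Esl3 8 = m3 1 0 0 0 1 0 0 0 (-2)" by (simp add: Esl3_def)
definition csl3 :: "nat \<Rightarrow> real^3^3 \<Rightarrow> real" where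
  "csl3 k A = (if k = 1 then (A$1$1 - A$2$2) / 2
    else if k = 2 then A$1$2
    else if k = 3 then A$2$1
    else if k = 4 then A$1$3
    else if k = 5 then A$2$3
    else if k = 6 then A$3$2
    else if k = 7 then - A$3$1
    else - A$3$3 / 2)"

lemma lin_sl3: "k \<in> {1..8} \<Longrightarrow> linear (csl3 k)"
  unfolding nat8 by (auto intro!: linearI simp: csl3_def field_simps)

lemma cE_sl3_1: "\<forall>k\<in>{1..8}. csl3 k (Esl3 1) = (if 1 = k then 1 else 0)"
  unfolding nat8 by (simp add: csl3_def Esl3_1)
lemma cE_sl3_2: "\<forall>k\<in>{1..8}. csl3 k (Esl3 2) = (if 2 = k then 1 else 0)"
  unfolding nat8 by (simp add: csl3_def Esl3_2)
lemma cE_sl3_3: "\<forall>k\<in>{1..8}. csl3 k (Esl3 3) = (if 3 = k then 1 else 0)"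
  unfolding nat8 by (simp add: csl3_def Esl3_3)
lemma cE_sl3_4: "\<forall>k\<in>{1..8}. csl3 k (Esl3 4) = (if 4 = k then 1 else 0)"
  unfolding nat8 by (simp add: csl3_def Esl3_4)
lemma cE_sl3_5: "\<forall>k\<in>{1..8}. csl3 k (Esl3 5) = (if 5 = k then 1 else 0)"
  unfolding nat8 by (simp add: csl3_def Esl3_5)
lemma cE_sl3_6: "\<forall>k\<in>{1..8}. csl3 k (Esl3 6) = (if 6 = k then 1 else 0)"
  unfolding nat8 by (simp add: csl3_def Esl3_6)
lemma cE_sl3_7: "\<forall>k\<in>{1..8}. csl3 k (Esl3 7) = (if 7 = k then 1 else 0)"
  unfolding nat8 by (simp add: csl3_def Esl3_7)
lemma cE_sl3_8: "\<forall>k\<in>{1..8}. csl3 k (Esl3 8) = (if 8 = k then 1 else 0)"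
  unfolding nat8 by (simp add: csl3_def Esl3_8)
lemma cE_sl3: "\<forall>i\<in>{1..8}. \<forall>k\<in>{1..8}. csl3 k (Esl3 i) = (if i = k then 1 else 0)"
  unfolding nat8 using cE_sl3_1 cE_sl3_2 cE_sl3_3 cE_sl3_4 cE_sl3_5 cE_sl3_6 cE_sl3_7 cE_sl3_8 by simp

lemma ok_sl3_1_1: "okc csl3 Esl3 commutator C_L77 1 1"
  unfolding okc_def nat8 by (simp add: csl3_def Esl3_1  comm_entry antisym_sc_def C_L77_def sc_table_def)
lemma ok_sl3_1_2: "okc csl3 Esl3 commutator C_L77 1 2"
  unfolding okc_def nat8 by (simp add: csl3_def Esl3_1 Esl3_2 comm_entry antisym_sc_def C_L77_def sc_table_def)
lemma ok_sl3_1_3: "okc csl3 Esl3 commutator C_L77 1 3"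
  unfolding okc_def nat8 by (simp add: csl3_def Esl3_1 Esl3_3 comm_entry antisym_sc_def C_L77_def sc_table_def)
lemma ok_sl3_1_4: "okc csl3 Esl3 commutator C_L77 1 4"
  unfolding okc_def nat8 by (simp add: csl3_def Esl3_1 Esl3_4 comm_entry antisym_sc_def C_L77_def sc_table_def)
lemma ok_sl3_1_5: "okc csl3 Esl3 commutator C_L77 1 5"
  unfolding okc_def nat8 by (simp add: csl3_def Esl3_1 Esl3_5 comm_entry antisym_sc_def C_L77_def sc_table_def)
lemma ok_sl3_1_6: "okc csl3 Esl3 commutator C_L77 1 6"
  unfolding okc_def nat8 by (simp add: csl3_def Esl3_1 Esl3_6 comm_entry antisym_sc_def C_L77_def sc_table_def)
lemma ok_sl3_1_7: "okc csl3 Esl3 commutator C_L77 1 7"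
  unfolding okc_def nat8 by (simp add: csl3_def Esl3_1 Esl3_7 comm_entry antisym_sc_def C_L77_def sc_table_def)
lemma ok_sl3_1_8: "okc csl3 Esl3 commutator C_L77 1 8"
  unfolding okc_def nat8 by (simp add: csl3_def Esl3_1 Esl3_8 comm_entry antisym_sc_def C_L77_def sc_table_def)
lemma ok_sl3_2_1: "okc csl3 Esl3 commutator C_L77 2 1"
  unfolding okc_def nat8 by (simp add: csl3_def Esl3_2 Esl3_1 comm_entry antisym_sc_def C_L77_def sc_table_def)
lemma ok_sl3_2_2: "okc csl3 Esl3 commutator C_L77 2 2"
  unfolding okc_def nat8 by (simp add: csl3_def Esl3_2  comm_entry antisym_sc_def C_L77_def sc_table_def)
lemma ok_sl3_2_3: "okc csl3 Esl3 commutator C_L77 2 3"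
  unfolding okc_def nat8 by (simp add: csl3_def Esl3_2 Esl3_3 comm_entry antisym_sc_def C_L77_def sc_table_def)
lemma ok_sl3_2_4: "okc csl3 Esl3 commutator C_L77 2 4"
  unfolding okc_def nat8 by (simp add: csl3_def Esl3_2 Esl3_4 comm_entry antisym_sc_def C_L77_def sc_table_def)
lemma ok_sl3_2_5: "okc csl3 Esl3 commutator C_L77 2 5"
  unfolding okc_def nat8 by (simp add: csl3_def Esl3_2 Esl3_5 comm_entry antisym_sc_def C_L77_def sc_table_def)
lemma ok_sl3_2_6: "okc csl3 Esl3 commutator C_L77 2 6"
  unfolding okc_def nat8 by (simp add: csl3_def Esl3_2 Esl3_6 comm_entry antisym_sc_def C_L77_def sc_table_def)
lemma ok_sl3_2_7: "okc csl3 Esl3 commutator C_L77 2 7"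
  unfolding okc_def nat8 by (simp add: csl3_def Esl3_2 Esl3_7 comm_entry antisym_sc_def C_L77_def sc_table_def)
lemma ok_sl3_2_8: "okc csl3 Esl3 commutator C_L77 2 8"
  unfolding okc_def nat8 by (simp add: csl3_def Esl3_2 Esl3_8 comm_entry antisym_sc_def C_L77_def sc_table_def)
lemma ok_sl3_3_1: "okc csl3 Esl3 commutator C_L77 3 1"
  unfolding okc_def nat8 by (simp add: csl3_def Esl3_3 Esl3_1 comm_entry antisym_sc_def C_L77_def sc_table_def)
lemma ok_sl3_3_2: "okc csl3 Esl3 commutator C_L77 3 2"
  unfolding okc_def nat8 by (simp add: csl3_def Esl3_3 Esl3_2 comm_entry antisym_sc_def C_L77_def sc_table_def)
lemma ok_sl3_3_3: "okc csl3 Esl3 commutator C_L77 3 3"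
  unfolding okc_def nat8 by (simp add: csl3_def Esl3_3  comm_entry antisym_sc_def C_L77_def sc_table_def)
lemma ok_sl3_3_4: "okc csl3 Esl3 commutator C_L77 3 4"
  unfolding okc_def nat8 by (simp add: csl3_def Esl3_3 Esl3_4 comm_entry antisym_sc_def C_L77_def sc_table_def)
lemma ok_sl3_3_5: "okc csl3 Esl3 commutator C_L77 3 5"
  unfolding okc_def nat8 by (simp add: csl3_def Esl3_3 Esl3_5 comm_entry antisym_sc_def C_L77_def sc_table_def)
lemma ok_sl3_3_6: "okc csl3 Esl3 commutator C_L77 3 6"
  unfolding okc_def nat8 by (simp add: csl3_def Esl3_3 Esl3_6 comm_entry antisym_sc_def C_L77_def sc_table_def)
lemma ok_sl3_3_7: "okc csl3 Esl3 commutator C_L77 3 7"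
  unfolding okc_def nat8 by (simp add: csl3_def Esl3_3 Esl3_7 comm_entry antisym_sc_def C_L77_def sc_table_def)
lemma ok_sl3_3_8: "okc csl3 Esl3 commutator C_L77 3 8"
  unfolding okc_def nat8 by (simp add: csl3_def Esl3_3 Esl3_8 comm_entry antisym_sc_def C_L77_def sc_table_def)
lemma ok_sl3_4_1: "okc csl3 Esl3 commutator C_L77 4 1"
  unfolding okc_def nat8 by (simp add: csl3_def Esl3_4 Esl3_1 comm_entry antisym_sc_def C_L77_def sc_table_def)
lemma ok_sl3_4_2: "okc csl3 Esl3 commutator C_L77 4 2"
  unfolding okc_def nat8 by (simp add: csl3_def Esl3_4 Esl3_2 comm_entry antisym_sc_def C_L77_def sc_table_def)
lemma ok_sl3_4_3: "okc csl3 Esl3 commutator C_L77 4 3"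
  unfolding okc_def nat8 by (simp add: csl3_def Esl3_4 Esl3_3 comm_entry antisym_sc_def C_L77_def sc_table_def)
lemma ok_sl3_4_4: "okc csl3 Esl3 commutator C_L77 4 4"
  unfolding okc_def nat8 by (simp add: csl3_def Esl3_4  comm_entry antisym_sc_def C_L77_def sc_table_def)
lemma ok_sl3_4_5: "okc csl3 Esl3 commutator C_L77 4 5"
  unfolding okc_def nat8 by (simp add: csl3_def Esl3_4 Esl3_5 comm_entry antisym_sc_def C_L77_def sc_table_def)
lemma ok_sl3_4_6: "okc csl3 Esl3 commutator C_L77 4 6"
  unfolding okc_def nat8 by (simp add: csl3_def Esl3_4 Esl3_6 comm_entry antisym_sc_def C_L77_def sc_table_def)
lemma ok_sl3_4_7: "okc csl3 Esl3 commutator C_L77 4 7"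
  unfolding okc_def nat8 by (simp add: csl3_def Esl3_4 Esl3_7 comm_entry antisym_sc_def C_L77_def sc_table_def)
lemma ok_sl3_4_8: "okc csl3 Esl3 commutator C_L77 4 8"
  unfolding okc_def nat8 by (simp add: csl3_def Esl3_4 Esl3_8 comm_entry antisym_sc_def C_L77_def sc_table_def)
lemma ok_sl3_5_1: "okc csl3 Esl3 commutator C_L77 5 1"
  unfolding okc_def nat8 by (simp add: csl3_def Esl3_5 Esl3_1 comm_entry antisym_sc_def C_L77_def sc_table_def)
lemma ok_sl3_5_2: "okc csl3 Esl3 commutator C_L77 5 2"
  unfolding okc_def nat8 by (simp add: csl3_def Esl3_5 Esl3_2 comm_entry antisym_sc_def C_L77_def sc_table_def)
lemma ok_sl3_5_3: "okc csl3 Esl3 commutator C_L77 5 3"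
  unfolding okc_def nat8 by (simp add: csl3_def Esl3_5 Esl3_3 comm_entry antisym_sc_def C_L77_def sc_table_def)
lemma ok_sl3_5_4: "okc csl3 Esl3 commutator C_L77 5 4"
  unfolding okc_def nat8 by (simp add: csl3_def Esl3_5 Esl3_4 comm_entry antisym_sc_def C_L77_def sc_table_def)
lemma ok_sl3_5_5: "okc csl3 Esl3 commutator C_L77 5 5"
  unfolding okc_def nat8 by (simp add: csl3_def Esl3_5  comm_entry antisym_sc_def C_L77_def sc_table_def)
lemma ok_sl3_5_6: "okc csl3 Esl3 commutator C_L77 5 6"
  unfolding okc_def nat8 by (simp add: csl3_def Esl3_5 Esl3_6 comm_entry antisym_sc_def C_L77_def sc_table_def)
lemma ok_sl3_5_7: "okc csl3 Esl3 commutator C_L77 5 7"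
  unfolding okc_def nat8 by (simp add: csl3_def Esl3_5 Esl3_7 comm_entry antisym_sc_def C_L77_def sc_table_def)
lemma ok_sl3_5_8: "okc csl3 Esl3 commutator C_L77 5 8"
  unfolding okc_def nat8 by (simp add: csl3_def Esl3_5 Esl3_8 comm_entry antisym_sc_def C_L77_def sc_table_def)
lemma ok_sl3_6_1: "okc csl3 Esl3 commutator C_L77 6 1"
  unfolding okc_def nat8 by (simp add: csl3_def Esl3_6 Esl3_1 comm_entry antisym_sc_def C_L77_def sc_table_def)
lemma ok_sl3_6_2: "okc csl3 Esl3 commutator C_L77 6 2"
  unfolding okc_def nat8 by (simp add: csl3_def Esl3_6 Esl3_2 comm_entry antisym_sc_def C_L77_def sc_table_def)
lemma ok_sl3_6_3: "okc csl3 Esl3 commutator C_L77 6 3"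
  unfolding okc_def nat8 by (simp add: csl3_def Esl3_6 Esl3_3 comm_entry antisym_sc_def C_L77_def sc_table_def)
lemma ok_sl3_6_4: "okc csl3 Esl3 commutator C_L77 6 4"
  unfolding okc_def nat8 by (simp add: csl3_def Esl3_6 Esl3_4 comm_entry antisym_sc_def C_L77_def sc_table_def)
lemma ok_sl3_6_5: "okc csl3 Esl3 commutator C_L77 6 5"
  unfolding okc_def nat8 by (simp add: csl3_def Esl3_6 Esl3_5 comm_entry antisym_sc_def C_L77_def sc_table_def)
lemma ok_sl3_6_6: "okc csl3 Esl3 commutator C_L77 6 6"
  unfolding okc_def nat8 by (simp add: csl3_def Esl3_6  comm_entry antisym_sc_def C_L77_def sc_table_def)
lemma ok_sl3_6_7: "okc csl3 Esl3 commutator C_L77 6 7"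
  unfolding okc_def nat8 by (simp add: csl3_def Esl3_6 Esl3_7 comm_entry antisym_sc_def C_L77_def sc_table_def)
lemma ok_sl3_6_8: "okc csl3 Esl3 commutator C_L77 6 8"
  unfolding okc_def nat8 by (simp add: csl3_def Esl3_6 Esl3_8 comm_entry antisym_sc_def C_L77_def sc_table_def)
lemma ok_sl3_7_1: "okc csl3 Esl3 commutator C_L77 7 1"
  unfolding okc_def nat8 by (simp add: csl3_def Esl3_7 Esl3_1 comm_entry antisym_sc_def C_L77_def sc_table_def)
lemma ok_sl3_7_2: "okc csl3 Esl3 commutator C_L77 7 2"
  unfolding okc_def nat8 by (simp add: csl3_def Esl3_7 Esl3_2 comm_entry antisym_sc_def C_L77_def sc_table_def)
lemma ok_sl3_7_3: "okc csl3 Esl3 commutator C_L77 7 3"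
  unfolding okc_def nat8 by (simp add: csl3_def Esl3_7 Esl3_3 comm_entry antisym_sc_def C_L77_def sc_table_def)
lemma ok_sl3_7_4: "okc csl3 Esl3 commutator C_L77 7 4"
  unfolding okc_def nat8 by (simp add: csl3_def Esl3_7 Esl3_4 comm_entry antisym_sc_def C_L77_def sc_table_def)
lemma ok_sl3_7_5: "okc csl3 Esl3 commutator C_L77 7 5"
  unfolding okc_def nat8 by (simp add: csl3_def Esl3_7 Esl3_5 comm_entry antisym_sc_def C_L77_def sc_table_def)
lemma ok_sl3_7_6: "okc csl3 Esl3 commutator C_L77 7 6"
  unfolding okc_def nat8 by (simp add: csl3_def Esl3_7 Esl3_6 comm_entry antisym_sc_def C_L77_def sc_table_def)
lemma ok_sl3_7_7: "okc csl3 Esl3 commutator C_L77 7 7"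
  unfolding okc_def nat8 by (simp add: csl3_def Esl3_7  comm_entry antisym_sc_def C_L77_def sc_table_def)
lemma ok_sl3_7_8: "okc csl3 Esl3 commutator C_L77 7 8"
  unfolding okc_def nat8 by (simp add: csl3_def Esl3_7 Esl3_8 comm_entry antisym_sc_def C_L77_def sc_table_def)
lemma ok_sl3_8_1: "okc csl3 Esl3 commutator C_L77 8 1"
  unfolding okc_def nat8 by (simp add: csl3_def Esl3_8 Esl3_1 comm_entry antisym_sc_def C_L77_def sc_table_def)
lemma ok_sl3_8_2: "okc csl3 Esl3 commutator C_L77 8 2"
  unfolding okc_def nat8 by (simp add: csl3_def Esl3_8 Esl3_2 comm_entry antisym_sc_def C_L77_def sc_table_def)
lemma ok_sl3_8_3: "okc csl3 Esl3 commutator C_L77 8 3"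
  unfolding okc_def nat8 by (simp add: csl3_def Esl3_8 Esl3_3 comm_entry antisym_sc_def C_L77_def sc_table_def)
lemma ok_sl3_8_4: "okc csl3 Esl3 commutator C_L77 8 4"
  unfolding okc_def nat8 by (simp add: csl3_def Esl3_8 Esl3_4 comm_entry antisym_sc_def C_L77_def sc_table_def)
lemma ok_sl3_8_5: "okc csl3 Esl3 commutator C_L77 8 5"
  unfolding okc_def nat8 by (simp add: csl3_def Esl3_8 Esl3_5 comm_entry antisym_sc_def C_L77_def sc_table_def)
lemma ok_sl3_8_6: "okc csl3 Esl3 commutator C_L77 8 6"
  unfolding okc_def nat8 by (simp add: csl3_def Esl3_8 Esl3_6 comm_entry antisym_sc_def C_L77_def sc_table_def)
lemma ok_sl3_8_7: "okc csl3 Esl3 commutator C_L77 8 7"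
  unfolding okc_def nat8 by (simp add: csl3_def Esl3_8 Esl3_7 comm_entry antisym_sc_def C_L77_def sc_table_def)
lemma ok_sl3_8_8: "okc csl3 Esl3 commutator C_L77 8 8"
  unfolding okc_def nat8 by (simp add: csl3_def Esl3_8  comm_entry antisym_sc_def C_L77_def sc_table_def)
lemma ok_sl3: "\<forall>i\<in>{1..8}. \<forall>j\<in>{1..8}. okc csl3 Esl3 commutator C_L77 i j"
  unfolding nat8 using ok_sl3_1_1 ok_sl3_1_2 ok_sl3_1_3 ok_sl3_1_4 ok_sl3_1_5 ok_sl3_1_6 ok_sl3_1_7 ok_sl3_1_8 ok_sl3_2_1 ok_sl3_2_2 ok_sl3_2_3 ok_sl3_2_4 ok_sl3_2_5 ok_sl3_2_6 ok_sl3_2_7 ok_sl3_2_8 ok_sl3_3_1 ok_sl3_3_2 ok_sl3_3_3 ok_sl3_3_4 ok_sl3_3_5 ok_sl3_3_6 ok_sl3_3_7 ok_sl3_3_8 ok_sl3_4_1 ok_sl3_4_2 ok_sl3_4_3 ok_sl3_4_4 ok_sl3_4_5 ok_sl3_4_6 ok_sl3_4_7 ok_sl3_4_8 ok_sl3_5_1 ok_sl3_5_2 ok_sl3_5_3 ok_sl3_5_4 ok_sl3_5_5 ok_sl3_5_6 ok_sl3_5_7 ok_sl3_5_8 ok_sl3_6_1 ok_sl3_6_2 ok_sl3_6_3 ok_sl3_6_4 ok_sl3_6_5 ok_sl3_6_6 ok_sl3_6_7 ok_sl3_6_8 ok_sl3_7_1 ok_sl3_7_2 ok_sl3_7_3 ok_sl3_7_4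 ok_sl3_7_5 ok_sl3_7_6 ok_sl3_7_7 ok_sl3_7_8 ok_sl3_8_1 ok_sl3_8_2 ok_sl3_8_3 ok_sl3_8_4 ok_sl3_8_5 ok_sl3_8_6 ok_sl3_8_7 ok_sl3_8_8 by simp


lemma gsum_sl3: "(\<Sum>i\<in>{1..8}. x i *\<^sub>R Esl3 i) = m3 (1 * x 1 + 1 * x 8) (1 * x 2) (1 * x 4) (1 * x 3) ((-1) * x 1 + 1 * x 8) (1 * x 5) ((-1) * x 7) (1 * x 6) ((-2) * x 8)"
  unfolding nat8 by (simp add: Esl3_1 Esl3_2 Esl3_3 Esl3_4 Esl3_5 Esl3_6 Esl3_7 Esl3_8 vec_eq_iff forall_3  algebra_simps)

lemma gf_sl3: "A \<in> sl3R \<Longrightarrow> (\<Sum>i\<in>{1..8}. csl3 i A *\<^sub>R Esl3 i) = A"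
proof -
  assume A: "A \<in> sl3R"
  have H': "True" by simp
  have T': "A$3$3 = - A$1$1 - A$2$2" using A by (simp add: sl3R_def mtrace_def sum_3)
  show ?thesis
    unfolding gsum_sl3 using H' T'
    by (simp add: csl3_def vec_eq_iff forall_3  field_simps)
qed

lemma gV_sl3: "gmap Esl3 x \<in> sl3R"
  unfolding gmap_def gsum_sl3
  by (simp add: sl3R_def mtrace_def sum_3)

lemma contr_sl3: "is_contraction_of UNIV L77_L1 sl3R commutator"
  unfolding L77_L1_def
  by (rule abstract2[where c=csl3 and E=Esl3, OF lin_sl3 gf_sl3 gV_sl3 cE_sl3 bilinear_comm sl3_comm ok_sl3])



theorem proposition7:
  shows "is_contraction_of UNIV L72_L1 su3 commutator
       \<and> is_contraction_of UNIV L72_L1 su21 commutator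
       \<and> is_contraction_of UNIV L77_L1 su21 commutator
       \<and> is_contraction_of UNIV L77_L1 sl3R commutator"
  using contr_su3 contr_su21a contr_su21b contr_sl3 by blast

end
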